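(* Let $(W,S)$ be an even Coxeter system, i.e. $m_{s,t}$ is even or $\infty$ for all distinct $s,t\in S$, and let $x\in S$. Then $W^{\perp x}$ is finitely generated if and only if there are only finitely many $s\in S$ with $m_{x,s}<\infty$.
   Context: $(W,S)$ is a Coxeter system with $S$ possibly infinite; $m_{s,t}$ is the order of $st$. Geometric representation: $V$ has basis $\{\alpha_s\}_{s\in S}$ with symmetric bilinear form $\langle\alpha_s,\alpha_t\rangle=-\cos(\pi/m_{s,t})$ ($-1$ if $m_{s,t}=\infty$); $W$ acts by $s\cdot v=v-2\langle\alpha_s,v\rangle\alpha_s$; $\Phi=W\cdot\{\alpha_s\}$; for $\gamma=w\cdot\alpha_s$, $s_\gamma=wsw^{-1}$. $W^{\perp x}$ is the subgroup generated by $\{s_\gamma:\gamma\in\Phi,\ \langle\gamma,\alpha_x\rangle=0\}$. *)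

theory Defs
  imports Complex_Main "HOL-Library.Extended_Nat"
begin

definition coxeter_matrix :: "'a set \<Rightarrow> ('a \<Rightarrow> 'a \<Rightarrow> enat) \<Rightarrow> bool" where
  "coxeter_matrix S m \<longleftrightarrow>
     (\<forall>s\<in>S. m s s = 1) \<and> (\<forall>s\<in>S. \<forall>t\<in>S. m s t = m t s) \<and>
     (\<forall>s\<in>S. \<forall>t\<in>S. s \<noteq> t \<longrightarrow> m s t \<ge> 2)"

definition even_coxeter :: "'a set \<Rightarrow> ('a \<Rightarrow> 'a \<Rightarrow> enat) \<Rightarrow> bool" where
  "even_coxeter S m \<longleftrightarrow>
     (\<forall>s\<in>S. \<forall>t\<in>S. s \<noteq> t \<longrightarrow> m s t = \<infinity> \<or> (\<exists>k::nat. m s t = enat (2 * k)))"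

text \<open>Vectors of V are functions S -> real of finite support; <alpha_s, alpha_t>.\<close>
definition bcoef :: "('a \<Rightarrow> 'a \<Rightarrow> enat) \<Rightarrow> 'a \<Rightarrow> 'a \<Rightarrow> real" where
  "bcoef m s t = (case m s t of enat n \<Rightarrow> - cos (pi / real n) | \<infinity> \<Rightarrow> -1)"

definition vsupp :: "'a set \<Rightarrow> ('a \<Rightarrow> real) \<Rightarrow> 'a set" where
  "vsupp S v = {s\<in>S. v s \<noteq> 0}"

text \<open>The symmetric bilinear form (extended by 0 to vectors of infinite support).\<close>
definition bform :: "'a set \<Rightarrow> ('a \<Rightarrow> 'a \<Rightarrow> enat) \<Rightarrow> ('a \<Rightarrow> real) \<Rightarrow> ('a \<Rightarrow> real) \<Rightarrow> real" where
  "bform S m u v = (\<Sum>s\<in>vsupp S u. \<Sum>t\<in>vsupp S v. u s * v t * bcoef m s t)"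

definition simple_root :: "'a \<Rightarrow> ('a \<Rightarrow> real)" where
  "simple_root s = (\<lambda>t. if t = s then 1 else 0)"

definition sref :: "'a set \<Rightarrow> ('a \<Rightarrow> 'a \<Rightarrow> enat) \<Rightarrow> 'a \<Rightarrow> ('a \<Rightarrow> real) \<Rightarrow> ('a \<Rightarrow> real)" where
  "sref S m s v = (\<lambda>t. v t - 2 * bform S m (simple_root s) v * simple_root s t)"

inductive_set gen_group :: "('b \<Rightarrow> 'b) set \<Rightarrow> ('b \<Rightarrow> 'b) set" for A where
  gen_id: "id \<in> gen_group A"
| gen_base: "a \<in> A \<Longrightarrow> a \<in> gen_group A"
| gen_comp: "f \<in> gen_group A \<Longrightarrow> g \<in> gen_group A \<Longrightarrow> f \<circ> g \<in> gen_group A"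
| gen_inv: "f \<in> gen_group A \<Longrightarrow> inv f \<in> gen_group A"

text \<open>W, realised through its (faithful) geometric representation.\<close>
definition coxW :: "'a set \<Rightarrow> ('a \<Rightarrow> 'a \<Rightarrow> enat) \<Rightarrow> (('a \<Rightarrow> real) \<Rightarrow> ('a \<Rightarrow> real)) set" where
  "coxW S m = gen_group (sref S m ` S)"

definition roots :: "'a set \<Rightarrow> ('a \<Rightarrow> 'a \<Rightarrow> enat) \<Rightarrow> ('a \<Rightarrow> real) set" where
  "roots S m = {w (simple_root s) | w s. w \<in> coxW S m \<and> s \<in> S}"

definition perp_reflections :: "'a set \<Rightarrow> ('a \<Rightarrow> 'a \<Rightarrow> enat) \<Rightarrow> 'a \<Rightarrow> (('a \<Rightarrow> real) \<Rightarrow> ('a \<Rightarrow> real)) set" where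
  "perp_reflections S m x =
     {w \<circ> sref S m s \<circ> inv w | w s. w \<in> coxW S m \<and> s \<in> S \<and>
        bform S m (w (simple_root s)) (simple_root x) = 0}"

definition Wperp :: "'a set \<Rightarrow> ('a \<Rightarrow> 'a \<Rightarrow> enat) \<Rightarrow> 'a \<Rightarrow> (('a \<Rightarrow> real) \<Rightarrow> ('a \<Rightarrow> real)) set" where
  "Wperp S m x = gen_group (perp_reflections S m x)"

definition finitely_generated :: "('b \<Rightarrow> 'b) set \<Rightarrow> bool" where
  "finitely_generated G \<longleftrightarrow> (\<exists>F. finite F \<and> F \<subseteq> G \<and> gen_group F = G)"

end

theory Submission
  imports Defs
begin


lemma vsupp_simple: "s \<in> S \<Longrightarrow> vsupp S (simple_root s) = {s}"
  by (auto simp: vsupp_def simple_root_def)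

lemma bform_simple_left:
  assumes "s \<in> S"
  shows "bform S m (simple_root s) v = (\<Sum>t\<in>vsupp S v. v t * bcoef m s t)"
  using assms by (simp add: bform_def vsupp_simple) (simp add: simple_root_def)

lemma bform_simple_left_fin:
  assumes "s \<in> S" "finite F" "vsupp S v \<subseteq> F" "F \<subseteq> S"
  shows "bform S m (simple_root s) v = (\<Sum>t\<in>F. v t * bcoef m s t)"
  unfolding bform_simple_left[OF assms(1)]
  by (rule sum.mono_neutral_left) (use assms in \<open>auto simp: vsupp_def\<close>)

lemma bcoef_diag: "coxeter_matrix S m \<Longrightarrow> s \<in> S \<Longrightarrow> bcoef m s s = 1"
  by (simp add: coxeter_matrix_def bcoef_def one_enat_def)

lemma bcoef_sym: "coxeter_matrix S m \<Longrightarrow> s \<in> S \<Longrightarrow> t \<in> S \<Longrightarrow> bcoef m s t = bcoef m t s"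
  by (simp add: coxeter_matrix_def bcoef_def)

lemma bform_sym:
  assumes "coxeter_matrix S m"
  shows "bform S m u v = bform S m v u"
  unfolding bform_def
  apply (subst sum.swap)
  apply (intro sum.cong refl)
  using bcoef_sym[OF assms] by (auto simp: vsupp_def)

lemma sref_simple_self:
  assumes "coxeter_matrix S m" "s \<in> S"
  shows "sref S m s (simple_root s) = - simple_root s"
proof -
  have "bform S m (simple_root s) (simple_root s) = 1"
    using assms by (simp add: bform_simple_left vsupp_simple bcoef_diag) (simp add: simple_root_def)
  then show ?thesis by (auto simp: sref_def fun_eq_iff)
qed

lemma sref_invol:
  assumes "coxeter_matrix S m" "s \<in> S"
  shows "sref S m s (sref S m s v) = v"
proof (cases "finite (vsupp S v)")
  case False
  then have "bform S m (simple_root s) v = 0"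
    using assms by (simp add: bform_simple_left)
  then show ?thesis by (simp add: sref_def)
next
  case True
  define b where "b = bform S m (simple_root s) v"
  define F where "F = vsupp S v \<union> {s}"
  have u: "sref S m s v = (\<lambda>t. v t - 2 * b * simple_root s t)" by (simp add: sref_def b_def)
  have fin: "finite F" "F \<subseteq> S" using True assms by (auto simp: F_def vsupp_def)
  have "vsupp S (sref S m s v) \<subseteq> F" by (auto simp: u F_def vsupp_def simple_root_def)
  then have "bform S m (simple_root s) (sref S m s v) = (\<Sum>t\<in>F. (v t - 2 * b * simple_root s t) * bcoef m s t)"
    using bform_simple_left_fin[OF assms(2) fin(1) _ fin(2)] u by simp
  also have "\<dots> = (\<Sum>t\<in>F. v t * bcoef m s t) - 2 * b * (\<Sum>t\<in>F. simple_root s t * bcoef m s t)"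
    by (simp add: algebra_simps sum_subtractf sum_distrib_left)
  also have "(\<Sum>t\<in>F. v t * bcoef m s t) = b"
    unfolding b_def by (rule bform_simple_left_fin[symmetric]) (use fin assms in \<open>auto simp: F_def\<close>)
  also have "(\<Sum>t\<in>F. simple_root s t * bcoef m s t) = 1"
  proof -
    have "(\<Sum>t\<in>F. simple_root s t * bcoef m s t) = (\<Sum>t\<in>F. if t = s then bcoef m s t else 0)"
      by (intro sum.cong) (auto simp: simple_root_def)
    also have "\<dots> = 1" using fin assms by (simp add: F_def bcoef_diag)
    finally show ?thesis .
  qed
  finally have "bform S m (simple_root s) (sref S m s v) = - b" by simp
  then show ?thesis by (simp add: u) (simp add: sref_def b_def fun_eq_iff)
qed

lemma sref_bij: "coxeter_matrix S m \<Longrightarrow> s \<in> S \<Longrightarrow> bij (sref S m s)"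
  by (rule involuntory_imp_bij) (simp add: sref_invol)

lemma sref_neg:
  assumes "s \<in> S" shows "sref S m s (- v) = - sref S m s v"
proof -
  have "vsupp S (-v) = vsupp S v" by (auto simp: vsupp_def)
  then have "bform S m (simple_root s) (-v) = - bform S m (simple_root s) v"
    using assms by (simp add: bform_simple_left sum_negf)
  then show ?thesis by (simp add: sref_def fun_eq_iff)
qed

definition fixJ :: "'a set \<Rightarrow> (('a \<Rightarrow> real) \<Rightarrow> ('a \<Rightarrow> real)) \<Rightarrow> bool" where
  "fixJ J g \<longleftrightarrow> bij g \<and> (\<forall>v t. t \<notin> J \<longrightarrow> g v t = v t)"

lemma fixJ_id: "fixJ J id" by (simp add: fixJ_def)

lemma fixJ_comp: "fixJ J f \<Longrightarrow> fixJ J g \<Longrightarrow> fixJ J (f \<circ> g)"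
  by (auto simp: fixJ_def bij_comp)

lemma fixJ_inv: assumes "fixJ J f" shows "fixJ J (inv f)"
proof -
  have b: "bij f" and h: "\<And>v t. t \<notin> J \<Longrightarrow> f v t = v t" using assms by (auto simp: fixJ_def)
  have "inv f v t = v t" if "t \<notin> J" for v t
  proof -
    have "f (inv f v) = v" using b by (simp add: bij_is_surj surj_f_inv_f)
    then show ?thesis using h[OF that, of "inv f v"] by simp
  qed
  then show ?thesis using b by (simp add: fixJ_def bij_imp_bij_inv)
qed

lemma fixJ_mono: "fixJ J f \<Longrightarrow> J \<subseteq> K \<Longrightarrow> fixJ K f"
  by (auto simp: fixJ_def)

lemma gen_group_fixJ: "g \<in> gen_group A \<Longrightarrow> (\<And>a. a \<in> A \<Longrightarrow> fixJ J a) \<Longrightarrow> fixJ J g"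
  by (induction rule: gen_group.induct) (auto intro: fixJ_id fixJ_comp fixJ_inv)

lemma gen_group_fixJ_fin:
  "g \<in> gen_group A \<Longrightarrow> (\<And>a. a \<in> A \<Longrightarrow> \<exists>J. finite J \<and> fixJ J a) \<Longrightarrow> \<exists>J. finite J \<and> fixJ J g"
proof (induction rule: gen_group.induct)
  case gen_id then show ?case using fixJ_id by blast
next
  case (gen_base a) then show ?case by blast
next
  case (gen_comp f g)
  then obtain J K where "finite J" "fixJ J f" "finite K" "fixJ K g" by blast
  then have "fixJ (J \<union> K) (f \<circ> g)" by (meson fixJ_comp fixJ_mono sup_ge1 sup_ge2)
  then show ?case using \<open>finite J\<close> \<open>finite K\<close> by blast
next
  case (gen_inv f) then show ?case using fixJ_inv by blast
qed

lemma sref_fixJ: "coxeter_matrix S m \<Longrightarrow> s \<in> S \<Longrightarrow> fixJ {s} (sref S m s)"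
  by (auto simp: fixJ_def sref_bij sref_def simple_root_def)

lemma coxW_fin: "coxeter_matrix S m \<Longrightarrow> g \<in> coxW S m \<Longrightarrow> \<exists>J. finite J \<and> fixJ J g"
  unfolding coxW_def by (erule gen_group_fixJ_fin) (auto dest: sref_fixJ)

lemma coxW_bij: "coxeter_matrix S m \<Longrightarrow> g \<in> coxW S m \<Longrightarrow> bij g"
  using coxW_fin fixJ_def by blast

definition negc :: "(('a \<Rightarrow> real) \<Rightarrow> ('a \<Rightarrow> real)) \<Rightarrow> bool" where
  "negc g \<longleftrightarrow> bij g \<and> (\<forall>v. g (- v) = - g v)"

lemma gen_group_negc: "g \<in> gen_group A \<Longrightarrow> (\<And>a. a \<in> A \<Longrightarrow> negc a) \<Longrightarrow> negc g"
proof (induction rule: gen_group.induct)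
  case gen_id then show ?case unfolding negc_def using bij_id by (simp add: id_def)
next
  case (gen_base a) then show ?case by blast
next
  case (gen_comp f g) then have "negc f" "negc g" by blast+
  then have "bij f" "bij g" "\<And>v. f (- v) = - f v" "\<And>v. g (- v) = - g v" by (simp_all add: negc_def)
  then show ?case unfolding negc_def by (simp add: bij_comp)
next
  case (gen_inv f)
  then have "negc f" by blast
  then have b: "bij f" and h: "\<And>v. f (- v) = - f v" by (simp_all add: negc_def)
  have "inv f (- v) = - inv f v" for v
  proof -
    have "f (- inv f v) = - v" using h b by (simp add: bij_is_surj surj_f_inv_f)
    then show ?thesis using b by (metis bij_inv_eq_iff)
  qed
  then show ?case using b by (simp add: negc_def bij_imp_bij_inv)
qed

lemma coxW_neg: "coxeter_matrix S m \<Longrightarrow> g \<in> coxW S m \<Longrightarrow> g (- v) = - g v"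
proof -
  assume c: "coxeter_matrix S m" and g: "g \<in> coxW S m"
  have "negc a" if "a \<in> sref S m ` S" for a
    using that c by (auto simp: negc_def sref_bij sref_neg)
  then have "negc g" using g gen_group_negc unfolding coxW_def by blast
  then show ?thesis by (simp add: negc_def)
qed

lemma perp_in_coxW: "r \<in> perp_reflections S m x \<Longrightarrow> r \<in> coxW S m"
  unfolding perp_reflections_def coxW_def
proof clarify
  fix w s assume w: "w \<in> gen_group (sref S m ` S)" and "s \<in> S"
  then have "sref S m s \<in> gen_group (sref S m ` S)" by (intro gen_base) auto
  then show "w \<circ> sref S m s \<circ> inv w \<in> gen_group (sref S m ` S)"
    by (rule gen_comp[OF gen_comp[OF w] gen_inv[OF w]])
qed

lemma Wperp_fin: "coxeter_matrix S m \<Longrightarrow> g \<in> Wperp S m x \<Longrightarrow> \<exists>J. finite J \<and> fixJ J g"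
  unfolding Wperp_def by (erule gen_group_fixJ_fin) (auto dest: perp_in_coxW coxW_fin)

lemma perp_refl_root:
  assumes "coxeter_matrix S m" "w \<in> coxW S m" "s \<in> S"
  shows "(w \<circ> sref S m s \<circ> inv w) (w (simple_root s)) = - w (simple_root s)"
proof -
  have "inj w" using coxW_bij[OF assms(1,2)] by (simp add: bij_is_inj)
  then show ?thesis using assms by (simp add: inv_f_f sref_simple_self coxW_neg fun_eq_iff)
qed


context
  fixes S :: "'a set" and m :: "'a \<Rightarrow> 'a \<Rightarrow> enat" and x s :: 'a and k :: nat
  assumes cox: "coxeter_matrix S m" and xS: "x \<in> S" and sS: "s \<in> S" and xs: "x \<noteq> s"
    and mxs: "m x s = enat (2 * k)" and k1: "k \<ge> 1"
begin

definition "thB = pi / real (2 * k)"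
definition "vvB \<phi> = (\<lambda>t. (sin (thB + \<phi>) * simple_root x t + sin \<phi> * simple_root s t) / sin thB)"

lemma th_pos: "0 < thB"
  using k1 by (auto simp: thB_def)

lemma th_le: "thB \<le> pi / 2"
proof -
  have "real (2 * k) \<ge> 2" using k1 by simp
  then show ?thesis unfolding thB_def by (intro divide_left_mono) auto
qed

lemma sin_th: "sin thB > 0"
  using th_pos th_le by (intro sin_gt_zero) auto

lemma bc_xs: "bcoef m x s = - cos thB" and bc_sx: "bcoef m s x = - cos thB"
  using mxs bcoef_sym[OF cox xS sS] by (auto simp: bcoef_def thB_def)

lemma vsupp_vv: "vsupp S (vvB \<phi>) \<subseteq> {x, s}"
  by (auto simp: vsupp_def vvB_def simple_root_def)

lemma vv_x: "vvB \<phi> x = sin (thB + \<phi>) / sin thB" and vv_s: "vvB \<phi> s = sin \<phi> / sin thB"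
  using xs by (auto simp: vvB_def simple_root_def)

lemma bform_x_vv: "bform S m (simple_root x) (vvB \<phi>) = cos \<phi>"
proof -
  have "bform S m (simple_root x) (vvB \<phi>) = vvB \<phi> x * bcoef m x x + vvB \<phi> s * bcoef m x s"
    using bform_simple_left_fin[OF xS _ vsupp_vv] xS sS xs by simp
  also have "\<dots> = (sin (thB + \<phi>) - sin \<phi> * cos thB) / sin thB"
    by (simp add: vv_x vv_s bcoef_diag[OF cox xS] bc_xs diff_divide_distrib)
  also have "\<dots> = cos \<phi>" using sin_th by (simp add: sin_add field_simps)
  finally show ?thesis .
qed

lemma bform_s_vv: "bform S m (simple_root s) (vvB \<phi>) = (sin \<phi> - cos thB * sin (thB + \<phi>)) / sin thB"
proof -
  have "bform S m (simple_root s) (vvB \<phi>) = vvB \<phi> x * bcoef m s x + vvB \<phi> s * bcoef m s s"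
    using bform_simple_left_fin[OF sS _ vsupp_vv] xS sS xs by simp
  also have "\<dots> = (sin \<phi> - cos thB * sin (thB + \<phi>)) / sin thB"
    using sin_th by (simp add: vv_x vv_s bcoef_diag[OF cox sS] bc_sx field_simps)
  finally show ?thesis .
qed

lemma sref_x_vv: "sref S m x (vvB \<phi>) = vvB (pi - \<phi>)"
proof
  fix t
  have "sin (thB + (pi - \<phi>)) = sin (thB + \<phi>) - 2 * cos \<phi> * sin thB"
    by (simp add: sin_add sin_diff cos_diff algebra_simps)
  moreover have "sin (pi - \<phi>) = sin \<phi>" by simp
  ultimately show "sref S m x (vvB \<phi>) t = vvB (pi - \<phi>) t"
    using sin_th xs unfolding sref_def bform_x_vv
    by (auto simp: vvB_def simple_root_def field_simps)
qed

lemma sref_s_vv: "sref S m s (vvB \<phi>) = vvB (pi - 2 * thB - \<phi>)"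
proof
  fix t
  have a: "sin (thB + (pi - 2 * thB - \<phi>)) = sin (thB + \<phi>)"
    by (simp add: sin_add sin_diff cos_diff cos_add algebra_simps)
  have b: "sin (pi - 2 * thB - \<phi>) = 2 * cos thB * sin (thB + \<phi>) - sin \<phi>"
  proof -
    have "sin (pi - 2 * thB - \<phi>) = sin (2 * thB + \<phi>)"
      by (metis diff_diff_eq sin_pi_minus)
    also have "\<dots> = sin (thB + (thB + \<phi>))" by (simp add: algebra_simps)
    also have "\<dots> = 2 * cos thB * sin (thB + \<phi>) - sin \<phi>"
    proof -
      have e1: "sin (thB + (thB + \<phi>)) = sin thB * cos (thB + \<phi>) + cos thB * sin (thB + \<phi>)" by (rule sin_add)
      have e2: "sin \<phi> = sin (thB + \<phi>) * cos thB - cos (thB + \<phi>) * sin thB"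
        using sin_diff[of "thB + \<phi>" thB] by simp
      show ?thesis by (simp only: e1 e2) (simp add: algebra_simps)
    qed
    finally show ?thesis .
  qed
  have b': "sin \<phi> / sin thB - 2 * ((sin \<phi> - cos thB * sin (thB + \<phi>)) / sin thB) = sin (pi - 2 * thB - \<phi>) / sin thB"
    unfolding b by (simp add: diff_divide_distrib algebra_simps)
  show "sref S m s (vvB \<phi>) t = vvB (pi - 2 * thB - \<phi>) t"
  proof (cases "t = s")
    case True
    then show ?thesis using xs b' unfolding sref_def bform_s_vv by (simp add: vvB_def simple_root_def)
  next
    case False
    then show ?thesis using a unfolding sref_def bform_s_vv by (simp add: vvB_def simple_root_def)
  qed
qed

definition "rotB = sref S m s \<circ> sref S m x"

lemma rot_vv: "rotB (vvB \<phi>) = vvB (\<phi> - 2 * thB)"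
proof -
  have "pi - 2 * thB - (pi - \<phi>) = \<phi> - 2 * thB" by simp
  then show ?thesis by (simp add: rotB_def sref_x_vv sref_s_vv)
qed

lemma rot_pow_vv: "(rotB ^^ j) (vvB \<phi>) = vvB (\<phi> - 2 * real j * thB)"
proof (induction j)
  case 0 then show ?case by simp
next
  case (Suc j)
  have eq: "\<phi> - 2 * real j * thB - 2 * thB = \<phi> - 2 * real (Suc j) * thB" by (simp add: algebra_simps)
  have "(rotB ^^ Suc j) (vvB \<phi>) = rotB (vvB (\<phi> - 2 * real j * thB))" using Suc by simp
  also have "\<dots> = vvB (\<phi> - 2 * real (Suc j) * thB)" unfolding rot_vv eq ..
  finally show ?case .
qed

lemma rot_pow_coxW: "rotB ^^ j \<in> coxW S m"
proof (induction j)
  case 0 then show ?case using gen_id[of "sref S m ` S"] by (simp add: coxW_def id_def)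
next
  case (Suc j)
  have "rotB \<in> coxW S m" unfolding rotB_def coxW_def using xS sS
    by (intro gen_comp gen_base) auto
  then have "rotB \<circ> rotB ^^ j \<in> coxW S m" using Suc gen_comp[of rotB "sref S m ` S" "rotB ^^ j"] by (simp add: coxW_def)
  then show ?case by (simp only: funpow.simps)
qed

lemma vv_alpha_x: "vvB 0 = simple_root x"
  using sin_th xs by (auto simp: vvB_def simple_root_def fun_eq_iff)

lemma vv_alpha_s: "vvB (pi - thB) = simple_root s"
  using sin_th xs by (auto simp: vvB_def simple_root_def fun_eq_iff)

lemma k_th: "real k * thB = pi / 2"
  using k1 by (simp add: thB_def)

lemma perp_root_exists:
  "\<exists>w t. w \<in> coxW S m \<and> t \<in> S \<and> bform S m (w (simple_root t)) (simple_root x) = 0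
      \<and> w (simple_root t) s \<noteq> 0"
proof (cases "even k")
  case True
  then obtain j where j: "k = 2 * j" by auto
  have h: "0 - 2 * real j * thB = - (pi / 2)" using k_th j by simp
  have e: "(rotB ^^ j) (simple_root x) = vvB (- (pi / 2))"
    using rot_pow_vv[of j 0] vv_alpha_x unfolding h by simp
  show ?thesis
    apply (rule exI[of _ "rotB ^^ j"], rule exI[of _ x])
    using rot_pow_coxW xS sin_th
    by (simp add: e bform_sym[OF cox, of _ "simple_root x"] bform_x_vv vv_s)
next
  case False
  then obtain j where j: "k = 2 * j + 1" by (metis oddE)
  have h: "pi - thB - 2 * real j * thB = pi / 2" using k_th j by (simp add: algebra_simps)
  have e: "(rotB ^^ j) (simple_root s) = vvB (pi / 2)"
    using rot_pow_vv[of j "pi - thB"] vv_alpha_s unfolding h by simp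
  show ?thesis
    apply (rule exI[of _ "rotB ^^ j"], rule exI[of _ s])
    using rot_pow_coxW sS sin_th
    by (simp add: e bform_sym[OF cox, of _ "simple_root x"] bform_x_vv vv_s)
qed

lemma vv_half: "vvB (pi / 2) = (\<lambda>u. (cos thB * simple_root x u + simple_root s u) / sin thB)"
  by (simp add: vvB_def fun_eq_iff sin_add)

lemma vv_mhalf: "vvB (- (pi / 2)) = - vvB (pi / 2)"
proof -
  have "sin (thB + - (pi / 2)) = - cos thB" "sin (thB + pi / 2) = cos thB" by (simp_all add: sin_add sin_diff)
  then show ?thesis by (simp add: vvB_def fun_eq_iff) (simp add: diff_divide_distrib add_divide_distrib)
qed

lemma perp_root_eta:
  "\<exists>w t. w \<in> coxW S m \<and> t \<in> S \<and>
     (w (simple_root t) = (\<lambda>u. (cos (pi / real (2 * k)) * simple_root x u + simple_root s u) / sin (pi / real (2 * k)))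
      \<or> w (simple_root t) = - (\<lambda>u. (cos (pi / real (2 * k)) * simple_root x u + simple_root s u) / sin (pi / real (2 * k))))"
proof (cases "even k")
  case True
  then obtain j where j: "k = 2 * j" by auto
  have h: "0 - 2 * real j * thB = - (pi / 2)" using k_th j by simp
  have e: "(rotB ^^ j) (simple_root x) = vvB (- (pi / 2))"
    using rot_pow_vv[of j 0] vv_alpha_x unfolding h by simp
  show ?thesis
    apply (rule exI[of _ "rotB ^^ j"], rule exI[of _ x])
    using rot_pow_coxW xS e vv_mhalf vv_half by (simp add: thB_def)
next
  case False
  then obtain j where j: "k = 2 * j + 1" by (metis oddE)
  have h: "pi - thB - 2 * real j * thB = pi / 2" using k_th j by (simp add: algebra_simps)
  have e: "(rotB ^^ j) (simple_root s) = vvB (pi / 2)"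
    using rot_pow_vv[of j "pi - thB"] vv_alpha_s unfolding h by simp
  show ?thesis
    apply (rule exI[of _ "rotB ^^ j"], rule exI[of _ s])
    using rot_pow_coxW sS e vv_half by (simp add: thB_def)
qed

end


lemma fg_imp_finite:
  assumes cox: "coxeter_matrix S m" and ev: "even_coxeter S m" and xS: "x \<in> S"
    and fg: "finitely_generated (Wperp S m x)"
  shows "finite {s \<in> S. m x s < \<infinity>}"
proof -
  obtain F where F: "finite F" "F \<subseteq> Wperp S m x" "gen_group F = Wperp S m x"
    using fg by (auto simp: finitely_generated_def)
  have "\<forall>f\<in>F. \<exists>J. finite J \<and> fixJ J f" using F(2) Wperp_fin[OF cox] by blast
  then obtain Jf where Jf: "\<And>f. f \<in> F \<Longrightarrow> finite (Jf f) \<and> fixJ (Jf f) f" by metis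
  define J where "J = (\<Union>f\<in>F. Jf f)"
  have Jfin: "finite J" using F(1) Jf by (auto simp: J_def)
  have fixall: "fixJ J g" if "g \<in> Wperp S m x" for g
    using that unfolding F(3)[symmetric]
    by (rule gen_group_fixJ) (use Jf in \<open>auto simp: J_def intro: fixJ_mono\<close>)
  have "s \<in> J" if s: "s \<in> S" "s \<noteq> x" "m x s < \<infinity>" for s
  proof -
    obtain n where n: "m x s = enat n" using s(3) by (cases "m x s") auto
    obtain k where k: "n = 2 * k" using ev s xS n unfolding even_coxeter_def by fastforce
    have "m x s \<ge> 2" using cox s xS unfolding coxeter_matrix_def by metis
    then have k1: "k \<ge> 1" using n k by (cases k) (auto simp: numeral_eq_enat)
    obtain w t where wt: "w \<in> coxW S m" "t \<in> S" "bform S m (w (simple_root t)) (simple_root x) = 0"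
      "w (simple_root t) s \<noteq> 0"
      using perp_root_exists[OF cox xS s(1) _ _ k1] s(2) n k by metis
    define r where "r = w \<circ> sref S m t \<circ> inv w"
    have "r \<in> perp_reflections S m x" unfolding perp_reflections_def r_def using wt by blast
    then have "r \<in> Wperp S m x" unfolding Wperp_def by (rule gen_base)
    then have fx: "fixJ J r" by (rule fixall)
    have "r (w (simple_root t)) = - w (simple_root t)"
      unfolding r_def by (rule perp_refl_root[OF cox wt(1,2)])
    then have "r (w (simple_root t)) s \<noteq> w (simple_root t) s" using wt(4) by simp
    then show "s \<in> J" using fx unfolding fixJ_def by blast
  qed
  then have "{s \<in> S. m x s < \<infinity>} \<subseteq> insert x J" by auto
  then show ?thesis using Jfin finite_subset by blast
qed


locale coxsys =
  fixes S :: "'a set" and m :: "'a \<Rightarrow> 'a \<Rightarrow> enat"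
  assumes cox: "coxeter_matrix S m"
begin

abbreviation "B \<equiv> bform S m"
definition fs :: "('a \<Rightarrow> real) \<Rightarrow> bool" where "fs v \<longleftrightarrow> finite (vsupp S v)"
definition lc :: "real \<Rightarrow> ('a \<Rightarrow> real) \<Rightarrow> real \<Rightarrow> ('a \<Rightarrow> real) \<Rightarrow> ('a \<Rightarrow> real)" where
  "lc a u b v = (\<lambda>t. a * u t + b * v t)"
definition refl :: "('a \<Rightarrow> real) \<Rightarrow> ('a \<Rightarrow> real) \<Rightarrow> ('a \<Rightarrow> real)" where
  "refl g v = (\<lambda>t. v t - 2 * B g v * g t)"

lemma sref_refl: "sref S m s = refl (simple_root s)"
  by (simp add: sref_def refl_def fun_eq_iff)

lemma B_nfs_right: "\<not> fs v \<Longrightarrow> B u v = 0"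
  by (simp add: bform_def fs_def)

lemma B_nfs_left: "\<not> fs u \<Longrightarrow> B u v = 0"
  by (simp add: bform_def fs_def)

lemma vsupp_sub: "vsupp S v \<subseteq> S" by (auto simp: vsupp_def)

lemma B_expand:
  assumes "finite A" "A \<subseteq> S" "vsupp S u \<subseteq> A" "finite C" "C \<subseteq> S" "vsupp S v \<subseteq> C"
  shows "B u v = (\<Sum>s\<in>A. \<Sum>t\<in>C. u s * v t * bcoef m s t)"
proof -
  have "B u v = (\<Sum>s\<in>vsupp S u. \<Sum>t\<in>C. u s * v t * bcoef m s t)"
    unfolding bform_def
    by (intro sum.cong refl sum.mono_neutral_left) (use assms in \<open>auto simp: vsupp_def intro: finite_subset\<close>)
  also have "\<dots> = (\<Sum>s\<in>A. \<Sum>t\<in>C. u s * v t * bcoef m s t)"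
    by (intro sum.mono_neutral_left) (use assms in \<open>auto simp: vsupp_def\<close>)
  finally show ?thesis .
qed

lemma fs_lc: "fs u \<Longrightarrow> fs v \<Longrightarrow> fs (lc a u b v)"
proof -
  assume "fs u" "fs v"
  moreover have "vsupp S (lc a u b v) \<subseteq> vsupp S u \<union> vsupp S v" by (auto simp: vsupp_def lc_def)
  ultimately show ?thesis unfolding fs_def by (meson finite_UnI finite_subset)
qed

lemma fs_simple: "s \<in> S \<Longrightarrow> fs (simple_root s)"
  by (simp add: fs_def vsupp_simple)

lemma B_lc_left:
  assumes "fs u" "fs v"
  shows "B (lc a u b v) z = a * B u z + b * B v z"
proof (cases "fs z")
  case False then show ?thesis by (simp add: B_nfs_right)
next
  case True
  let ?A = "vsupp S u \<union> vsupp S v" and ?C = "vsupp S z"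
  have fA: "finite ?A" "?A \<subseteq> S" using assms by (auto simp: fs_def vsupp_def)
  have fC: "finite ?C" "?C \<subseteq> S" using True by (auto simp: fs_def vsupp_def)
  have s1: "vsupp S (lc a u b v) \<subseteq> ?A" by (auto simp: vsupp_def lc_def)
  show ?thesis
    apply (subst B_expand[OF fA s1 fC subset_refl])
    apply (subst B_expand[OF fA _ fC subset_refl], blast)
    apply (subst B_expand[OF fA _ fC subset_refl], blast)
    by (simp add: lc_def sum_distrib_left sum.distrib algebra_simps)
qed

lemma B_sym: "B u v = B v u"
  using bform_sym[OF cox] .

lemma B_lc_right:
  assumes "fs u" "fs v"
  shows "B z (lc a u b v) = a * B z u + b * B z v"
  using B_lc_left[OF assms] by (simp add: B_sym)

lemma B_simple: "s \<in> S \<Longrightarrow> t \<in> S \<Longrightarrow> B (simple_root s) (simple_root t) = bcoef m s t"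
  by (simp add: bform_simple_left vsupp_simple) (simp add: simple_root_def)

lemma refl_lc: "refl g v = lc 1 v (- 2 * B g v) g"
  by (simp add: refl_def lc_def fun_eq_iff)

lemma lc_simps: "lc 1 v 0 w = v" "lc 0 w 1 v = v"
  by (auto simp: lc_def fun_eq_iff)

definition Lin :: "(('a \<Rightarrow> real) \<Rightarrow> ('a \<Rightarrow> real)) \<Rightarrow> bool" where
  "Lin f \<longleftrightarrow> bij f \<and> (\<forall>v. \<not> fs v \<longrightarrow> f v = v) \<and> (\<forall>v. fs v \<longrightarrow> fs (f v)) \<and>
     (\<forall>a u b v. fs u \<longrightarrow> fs v \<longrightarrow> f (lc a u b v) = lc a (f u) b (f v)) \<and>
     (\<forall>u v. fs u \<longrightarrow> fs v \<longrightarrow> B (f u) (f v) = B u v)"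

lemma Lin_id: "Lin id" by (simp add: Lin_def)

lemma Lin_comp: "Lin f \<Longrightarrow> Lin g \<Longrightarrow> Lin (f \<circ> g)"
  unfolding Lin_def by (simp add: bij_comp)

lemma Lin_inv: assumes "Lin f" shows "Lin (inv f)"
proof -
  have b: "bij f" and nf: "\<And>v. \<not> fs v \<Longrightarrow> f v = v" and ff: "\<And>v. fs v \<Longrightarrow> fs (f v)"
    and fl: "\<And>a u b v. fs u \<Longrightarrow> fs v \<Longrightarrow> f (lc a u b v) = lc a (f u) b (f v)"
    and fB: "\<And>u v. fs u \<Longrightarrow> fs v \<Longrightarrow> B (f u) (f v) = B u v"
    using assms unfolding Lin_def by blast+
  have fi: "f (inv f v) = v" for v using b by (simp add: bij_is_surj surj_f_inv_f)
  have if_: "inv f (f v) = v" for v using b by (simp add: bij_is_inj inv_f_f)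
  have nfi: "inv f v = v" if "\<not> fs v" for v using nf[OF that] if_ by metis
  have ffi: "fs (inv f v)" if "fs v" for v
  proof (rule ccontr)
    assume "\<not> fs (inv f v)"
    then have "f (inv f v) = inv f v" by (rule nf)
    then show False using fi that \<open>\<not> fs (inv f v)\<close> by metis
  qed
  have "inv f (lc a u c v) = lc a (inv f u) c (inv f v)" if "fs u" "fs v" for a u c v
  proof -
    have "f (lc a (inv f u) c (inv f v)) = lc a u c v" using fl[OF ffi[OF that(1)] ffi[OF that(2)]] fi by simp
    then show ?thesis using if_ by metis
  qed
  moreover have "B (inv f u) (inv f v) = B u v" if "fs u" "fs v" for u v
    using fB[OF ffi[OF that(1)] ffi[OF that(2)]] fi by simp
  ultimately show ?thesis using b nfi ffi by (simp add: Lin_def bij_imp_bij_inv)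
qed

lemma gen_group_Lin: "g \<in> gen_group A \<Longrightarrow> (\<And>a. a \<in> A \<Longrightarrow> Lin a) \<Longrightarrow> Lin g"
  by (induction rule: gen_group.induct) (auto intro: Lin_id Lin_comp Lin_inv)

lemma refl_invol:
  assumes "fs g" "B g g = 1"
  shows "refl g (refl g v) = v"
proof (cases "fs v")
  case False then show ?thesis by (simp add: refl_def B_nfs_right)
next
  case True
  have "B g (refl g v) = B g v - 2 * B g v * B g g"
    unfolding refl_lc by (simp add: B_lc_right[OF True assms(1)])
  then have "B g (refl g v) = - B g v" using assms by simp
  then show ?thesis by (simp add: refl_def fun_eq_iff)
qed

lemma refl_Lin:
  assumes "fs g" "B g g = 1"
  shows "Lin (refl g)"
proof -
  have bij: "bij (refl g)" by (rule involuntory_imp_bij) (simp add: refl_invol assms)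
  have nf: "refl g v = v" if "\<not> fs v" for v using that by (simp add: refl_def B_nfs_right)
  have ff: "fs (refl g v)" if "fs v" for v unfolding refl_lc by (rule fs_lc[OF that assms(1)])
  have fl: "refl g (lc a u b v) = lc a (refl g u) b (refl g v)" if "fs u" "fs v" for a u b v
  proof -
    have "B g (lc a u b v) = a * B g u + b * B g v" by (rule B_lc_right[OF that])
    then show ?thesis unfolding refl_def by (simp add: lc_def fun_eq_iff algebra_simps)
  qed
  have fB: "B (refl g u) (refl g v) = B u v" if "fs u" "fs v" for u v
  proof -
    have "B (refl g u) (refl g v) = B u v - 2 * B g v * B u g - 2 * B g u * (B g v - 2 * B g v * B g g)"
      unfolding refl_lc using that assms
      by (simp add: B_lc_left B_lc_right fs_lc algebra_simps)
    then show ?thesis using assms by (simp add: B_sym[of u g] algebra_simps)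
  qed
  show ?thesis unfolding Lin_def using bij nf ff fl fB by blast
qed

lemma B_simple_self: "s \<in> S \<Longrightarrow> B (simple_root s) (simple_root s) = 1"
  by (simp add: B_simple bcoef_diag[OF cox])

lemma sref_Lin: "s \<in> S \<Longrightarrow> Lin (sref S m s)"
  unfolding sref_refl by (rule refl_Lin[OF fs_simple B_simple_self])

lemma coxW_Lin: "w \<in> coxW S m \<Longrightarrow> Lin w"
  unfolding coxW_def by (erule gen_group_Lin) (auto intro: sref_Lin)

lemma refl_conj:
  assumes "Lin w" "fs g"
  shows "w \<circ> refl g \<circ> inv w = refl (w g)"
proof
  fix v
  have iw: "Lin (inv w)" using Lin_inv[OF assms(1)] .
  have fi: "w (inv w v) = v" using assms(1) by (simp add: Lin_def bij_is_surj surj_f_inv_f)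
  show "(w \<circ> refl g \<circ> inv w) v = refl (w g) v"
  proof (cases "fs v")
    case False
    have "inv w v = v" using iw False by (simp add: Lin_def)
    moreover have "refl g v = v" "refl (w g) v = v" using False by (simp_all add: refl_def B_nfs_right)
    moreover have "w v = v" using assms(1) False by (simp add: Lin_def)
    ultimately show ?thesis by simp
  next
    case True
    define u where "u = inv w v"
    have fu: "fs u" using iw True by (simp add: Lin_def u_def)
    have wu: "w u = v" using fi by (simp add: u_def)
    have "(w \<circ> refl g \<circ> inv w) v = w (lc 1 u (- 2 * B g u) g)" by (simp add: refl_lc u_def)
    also have "\<dots> = lc 1 v (- 2 * B g u) (w g)" using assms fu wu by (simp add: Lin_def)
    also have "B g u = B (w g) v"
    proof -
      have "B (w g) (w u) = B g u" using assms fu by (simp add: Lin_def)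
      then show ?thesis using wu by simp
    qed
    finally show ?thesis by (simp add: refl_lc)
  qed
qed

end


fun U :: "real \<Rightarrow> nat \<Rightarrow> real" where
  "U c 0 = 0" | "U c (Suc 0) = 1" | "U c (Suc (Suc n)) = 2 * c * U c (Suc n) - U c n"

lemma U_one: "U 1 n = real n"
  by (induction "1::real" n rule: U.induct) (auto simp: algebra_simps)

lemma U_cos:
  assumes "sin th \<noteq> 0"
  shows "U (cos th) n = sin (real n * th) / sin th"
proof (induction "cos th" n rule: U.induct)
  case 1 then show ?case by simp
next
  case 2 then show ?case using assms by simp
next
  case (3 n)
  have "sin (real (Suc (Suc n)) * th) = 2 * cos th * sin (real (Suc n) * th) - sin (real n * th)"
  proof -
    have "real (Suc (Suc n)) * th = real (Suc n) * th + th" "real n * th = real (Suc n) * th - th"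
      by (simp_all add: algebra_simps)
    then show ?thesis by (simp only: sin_add sin_diff) (simp add: algebra_simps)
  qed
  then show ?case using 3 assms by (simp add: field_simps)
qed

fun altw :: "'a \<Rightarrow> 'a \<Rightarrow> nat \<Rightarrow> 'a list" where
  "altw x y 0 = []" | "altw x y (Suc n) = altw y x n @ [y]"

lemma altw_length[simp]: "length (altw x y n) = n"
  by (induction n arbitrary: x y) auto

lemma altw_set: "set (altw x y n) \<subseteq> {x, y}"
  by (induction n arbitrary: x y) auto

lemma altw_Suc_front: "altw x y (Suc n) = (if even n then y else x) # altw x y n"
  by (induction n arbitrary: x y) auto

lemma altw_add: "altw x y (k + j) = (if even j then altw x y k else altw y x k) @ altw x y j"
  by (induction j arbitrary: x y) auto

lemma altw_char:
  assumes "set ws \<subseteq> {a, b}" "a \<noteq> b" "\<not> (\<exists>xs ys c. ws = xs @ [c, c] @ ys)" "ws = [] \<or> last ws = b"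
  shows "ws = altw a b (length ws)"
  using assms
proof (induction ws arbitrary: a b rule: rev_induct)
  case Nil then show ?case by simp
next
  case (snoc y xs)
  have yb: "y = b" using snoc.prems(4) by simp
  have nd: "\<not> (\<exists>as bs c. xs = as @ [c, c] @ bs)"
  proof
    assume "\<exists>as bs c. xs = as @ [c, c] @ bs"
    then obtain as bs c where "xs = as @ [c, c] @ bs" by blast
    then have "xs @ [y] = as @ [c, c] @ (bs @ [y])" by simp
    then show False using snoc.prems(3) by blast
  qed
  have "xs = [] \<or> last xs = a"
  proof (cases xs rule: rev_cases)
    case Nil then show ?thesis by simp
  next
    case (snoc zs z)
    have "z \<in> {a, b}" using snoc snoc.prems(1) by auto
    moreover have "z \<noteq> b"
    proof
      assume "z = b"
      then have "xs @ [y] = zs @ [b, b] @ []" using snoc yb by simp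
      then show False using \<open>xs = zs @ [z]\<close> snoc.prems(3) by blast
    qed
    ultimately show ?thesis using snoc by auto
  qed
  then have "xs = altw b a (length xs)"
    using snoc.IH[of b a] snoc.prems(1,2) nd by auto
  then show ?case using yb by simp
qed

context coxsys
begin

primrec prodw :: "'a list \<Rightarrow> (('a \<Rightarrow> real) \<Rightarrow> ('a \<Rightarrow> real))" where
  "prodw [] = id" | "prodw (s # ws) = sref S m s \<circ> prodw ws"

lemma prodw_append: "prodw (xs @ ys) = prodw xs \<circ> prodw ys"
  by (induction xs) auto

lemma prodw_Lin: "set ws \<subseteq> S \<Longrightarrow> Lin (prodw ws)"
  by (induction ws) (auto intro: Lin_id Lin_comp sref_Lin)

lemma sref_sref: "s \<in> S \<Longrightarrow> sref S m s \<circ> sref S m s = id"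
  by (simp add: fun_eq_iff sref_invol[OF cox])

lemma prodw_rev_comp: "set ws \<subseteq> S \<Longrightarrow> prodw ws \<circ> prodw (rev ws) = id"
proof (induction ws)
  case Nil then show ?case by simp
next
  case (Cons s ws)
  have "prodw (s # ws) \<circ> prodw (rev (s # ws)) = sref S m s \<circ> (prodw ws \<circ> prodw (rev ws)) \<circ> sref S m s"
    by (simp add: prodw_append comp_assoc)
  also have "\<dots> = id"
  proof -
    have h: "prodw ws \<circ> prodw (rev ws) = id" using Cons.IH Cons.prems by (simp add: comp_def id_def)
    show ?thesis unfolding h comp_id using Cons.prems by (simp add: sref_sref)
  qed
  finally show ?case .
qed

lemma prodw_rev: "set ws \<subseteq> S \<Longrightarrow> prodw (rev ws) = inv (prodw ws)"
  using prodw_rev_comp[of ws] prodw_rev_comp[of "rev ws"]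
  by (intro inv_unique_comp[symmetric]) auto

definition genA :: "'a set \<Rightarrow> (('a \<Rightarrow> real) \<Rightarrow> ('a \<Rightarrow> real)) set" where
  "genA A = {prodw ws | ws. set ws \<subseteq> A}"

lemma genA_comp: "f \<in> genA A \<Longrightarrow> g \<in> genA A \<Longrightarrow> f \<circ> g \<in> genA A"
proof -
  assume "f \<in> genA A" "g \<in> genA A"
  then obtain xs ys where "set xs \<subseteq> A" "prodw xs = f" "set ys \<subseteq> A" "prodw ys = g"
    unfolding genA_def by blast
  then show ?thesis unfolding genA_def by (intro CollectI exI[of _ "xs @ ys"]) (simp add: prodw_append)
qed

lemma genA_sref: "s \<in> A \<Longrightarrow> sref S m s \<in> genA A"
  unfolding genA_def by (auto intro!: exI[of _ "[s]"])

lemma genA_id: "id \<in> genA A"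
  unfolding genA_def by (auto intro!: exI[of _ "[]"])

lemma coxW_genA: "coxW S m = genA S"
proof
  show "coxW S m \<subseteq> genA S"
  proof
    fix g assume "g \<in> coxW S m"
    then show "g \<in> genA S" unfolding coxW_def
    proof (induction rule: gen_group.induct)
      case gen_id then show ?case unfolding genA_def by (intro CollectI exI[of _ "[]"]) (simp add: id_def)
    next
      case (gen_base a)
      then obtain s where "s \<in> S" "a = sref S m s" by blast
      then show ?case unfolding genA_def by (intro CollectI exI[of _ "[s]"]) simp
    next
      case (gen_comp f g) then show ?case using genA_comp by blast
    next
      case (gen_inv f)
      then obtain ws where "set ws \<subseteq> S" "f = prodw ws" unfolding genA_def by blast
      then show ?case unfolding genA_def by (intro CollectI exI[of _ "rev ws"]) (simp add: prodw_rev)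
    qed
  qed
next
  show "genA S \<subseteq> coxW S m"
  proof
    fix g assume "g \<in> genA S"
    then obtain ws where "set ws \<subseteq> S" "g = prodw ws" unfolding genA_def by blast
    then show "g \<in> coxW S m"
    proof (induction ws arbitrary: g)
      case Nil then show ?case unfolding coxW_def using gen_id by (simp add: id_def)
    next
      case (Cons s ws)
      then have "prodw ws \<in> gen_group (sref S m ` S)" "sref S m s \<in> gen_group (sref S m ` S)"
        unfolding coxW_def by (auto intro: gen_base)
      then have "sref S m s \<circ> prodw ws \<in> gen_group (sref S m ` S)" by (intro gen_comp)
      then show ?case unfolding coxW_def Cons.prems(2) prodw.simps .
    qed
  qed
qed

definition len :: "'a set \<Rightarrow> (('a \<Rightarrow> real) \<Rightarrow> ('a \<Rightarrow> real)) \<Rightarrow> nat" where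
  "len A w = (LEAST n. \<exists>ws. set ws \<subseteq> A \<and> length ws = n \<and> prodw ws = w)"

lemma len_le: "set ws \<subseteq> A \<Longrightarrow> len A (prodw ws) \<le> length ws"
  unfolding len_def by (rule Least_le) blast

lemma len_ex: "w \<in> genA A \<Longrightarrow> \<exists>ws. set ws \<subseteq> A \<and> length ws = len A w \<and> prodw ws = w"
  unfolding len_def genA_def by (rule LeastI_ex) blast

lemma len_mono: "w \<in> genA I \<Longrightarrow> I \<subseteq> A \<Longrightarrow> len A w \<le> len I w"
  using len_ex[of w I] len_le[of _ A] by force

lemma len_comp: "f \<in> genA A \<Longrightarrow> g \<in> genA A \<Longrightarrow> len A (f \<circ> g) \<le> len A f + len A g"
proof -
  assume "f \<in> genA A" "g \<in> genA A"
  then obtain xs ys where "set xs \<subseteq> A" "length xs = len A f" "prodw xs = f"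
      "set ys \<subseteq> A" "length ys = len A g" "prodw ys = g" using len_ex by metis
  then show ?thesis using len_le[of "xs @ ys" A] by (simp add: prodw_append)
qed

lemma len_sref: "s \<in> A \<Longrightarrow> len A (sref S m s) \<le> 1"
  using len_le[of "[s]" A] by simp

lemma genA_mono: "I \<subseteq> A \<Longrightarrow> genA I \<subseteq> genA A"
  unfolding genA_def by auto

end


locale ecox = coxsys +
  assumes ev: "even_coxeter S m"
begin

definition cc :: "'a \<Rightarrow> 'a \<Rightarrow> real" where "cc a b = - bcoef m a b"

lemma cc_sym: "a \<in> S \<Longrightarrow> b \<in> S \<Longrightarrow> cc a b = cc b a"
  by (simp add: cc_def bcoef_sym[OF cox])

lemma m_cases:
  assumes "a \<in> S" "b \<in> S" "a \<noteq> b"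
  obtains "m a b = \<infinity>" "cc a b = 1"
    | k where "k \<ge> 1" "m a b = enat (2 * k)" "cc a b = cos (pi / real (2 * k))"
proof (cases "m a b = \<infinity>")
  case True then show ?thesis using that(1) by (simp add: cc_def bcoef_def)
next
  case False
  have "\<exists>k. m a b = enat (2 * k)" using ev assms False unfolding even_coxeter_def by (meson)
  then obtain k where k: "m a b = enat (2 * k)" by blast
  have "m a b \<ge> 2" using cox assms unfolding coxeter_matrix_def by metis
  then have "k \<ge> 1" using k by (cases k) (auto simp: numeral_eq_enat)
  then show ?thesis using that(2) k by (simp add: cc_def bcoef_def)
qed

lemma B_ab: "a \<in> S \<Longrightarrow> b \<in> S \<Longrightarrow> B (simple_root a) (simple_root b) = - cc a b"
  by (simp add: B_simple cc_def)

lemma lc_eval: "lc p u q v t = p * u t + q * v t" by (simp add: lc_def)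

lemma sref_lc_a:
  assumes "a \<in> S" "b \<in> S" "a \<noteq> b"
  shows "sref S m a (lc p (simple_root a) q (simple_root b)) = lc (2 * cc a b * q - p) (simple_root a) q (simple_root b)"
proof -
  have "B (simple_root a) (lc p (simple_root a) q (simple_root b)) = p - cc a b * q"
    using assms by (simp add: B_lc_right fs_simple B_simple_self B_ab)
  then show ?thesis using assms by (simp add: sref_def lc_def fun_eq_iff simple_root_def algebra_simps)
qed

lemma sref_lc_b:
  assumes "a \<in> S" "b \<in> S" "a \<noteq> b"
  shows "sref S m b (lc p (simple_root a) q (simple_root b)) = lc p (simple_root a) (2 * cc a b * p - q) (simple_root b)"
proof -
  have "B (simple_root b) (lc p (simple_root a) q (simple_root b)) = q - cc a b * p"
    using assms by (simp add: B_lc_right fs_simple B_simple_self B_ab cc_sym)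
  then show ?thesis using assms by (simp add: sref_def lc_def fun_eq_iff simple_root_def algebra_simps)
qed

lemma alt_formula:
  assumes "a \<in> S" "b \<in> S" "a \<noteq> b"
  shows "prodw (altw a b j) (simple_root a) =
    (if even j then lc (U (cc a b) (Suc j)) (simple_root a) (U (cc a b) j) (simple_root b)
     else lc (U (cc a b) j) (simple_root a) (U (cc a b) (Suc j)) (simple_root b))"
proof (induction j)
  case 0 then show ?case by (simp add: lc_def)
next
  case (Suc j)
  show ?case
  proof (cases "even j")
    case True
    then show ?thesis using Suc assms
      by (simp add: altw_Suc_front sref_lc_b del: altw.simps(2))
  next
    case False
    then show ?thesis using Suc assms
      by (simp add: altw_Suc_front sref_lc_a del: altw.simps(2))
  qed
qed

lemma U_fin:
  assumes "k \<ge> 1"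
  defines "th \<equiv> pi / real (2 * k)"
  shows "sin th > 0" "U (cos th) n = sin (real n * th) / sin th"
proof -
  have "0 < th" "th < pi" using assms(1) by (auto simp: th_def field_simps)
  then show "sin th > 0" by (simp add: sin_gt_zero)
  then show "U (cos th) n = sin (real n * th) / sin th" by (simp add: U_cos)
qed

lemma U_fin_facts:
  assumes "k \<ge> 1"
  defines "c \<equiv> cos (pi / real (2 * k))"
  shows "\<And>n. n \<le> 2 * k \<Longrightarrow> U c n \<ge> 0"
    and "\<And>n. 0 < n \<Longrightarrow> n < 2 * k \<Longrightarrow> U c n > 0"
    and "U c (2 * k) = 0" and "U c (Suc (2 * k)) = -1" and "U c (2 * k - 1) = 1"
    and "c\<^sup>2 \<noteq> 1"
proof -
  define th where "th = pi / real (2 * k)"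
  have sp: "sin th > 0" and Ue: "\<And>n. U c n = sin (real n * th) / sin th"
    using U_fin[OF assms(1)] by (simp_all add: c_def th_def)
  have kth: "real (2 * k) * th = pi" using assms(1) by (simp add: th_def)
  show "U c n \<ge> 0" if "n \<le> 2 * k" for n
  proof -
    have thp: "th > 0" using assms(1) by (simp add: th_def)
    have "real n * th \<le> real (2 * k) * th" by (intro mult_right_mono) (use that thp in auto)
    then have "real n * th \<le> pi" using kth by simp
    moreover have "real n * th \<ge> 0" using thp by simp
    ultimately show ?thesis using sp by (simp add: Ue sin_ge_zero)
  qed
  show "U c n > 0" if "0 < n" "n < 2 * k" for n
  proof -
    have thp: "th > 0" using assms(1) by (simp add: th_def)
    have "real n * th < pi" using that kth thp by (metis mult_strict_right_mono of_nat_less_iff)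
    moreover have "real n * th > 0" using that thp by simp
    ultimately show ?thesis using sp by (simp add: Ue sin_gt_zero)
  qed
  show "U c (2 * k) = 0" using kth by (simp add: Ue)
  show "U c (Suc (2 * k)) = -1"
  proof -
    have "real (Suc (2 * k)) * th = pi + th" using kth by (simp add: algebra_simps)
    then show ?thesis using sp by (simp add: Ue)
  qed
  show "U c (2 * k - 1) = 1"
  proof -
    have "real (2 * k - 1) * th = pi - th" using kth assms(1) by (simp add: of_nat_diff algebra_simps)
    then show ?thesis using sp by (simp add: Ue)
  qed
  show "c\<^sup>2 \<noteq> 1"
  proof -
    have "c\<^sup>2 = 1 - (sin th)\<^sup>2" unfolding c_def th_def by (rule cos_squared_eq)
    then show ?thesis using sp by simp
  qed
qed

lemma decomp:
  assumes "a \<in> S" "b \<in> S" "a \<noteq> b" "(cc a b)\<^sup>2 \<noteq> 1" "fs v"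
  shows "\<exists>c1 c2 v'. fs v' \<and> B (simple_root a) v' = 0 \<and> B (simple_root b) v' = 0 \<and>
           v = lc 1 (lc c1 (simple_root a) c2 (simple_root b)) 1 v'"
proof -
  define c where "c = cc a b"
  define p where "p = B (simple_root a) v"
  define q where "q = B (simple_root b) v"
  define D where "D = 1 - c\<^sup>2"
  have D0: "D \<noteq> 0" using assms(4) by (simp add: D_def c_def)
  define c1 where "c1 = (p + c * q) / D"
  define c2 where "c2 = (q + c * p) / D"
  define w where "w = lc c1 (simple_root a) c2 (simple_root b)"
  define v' where "v' = lc 1 v (-1) w"
  have fw: "fs w" unfolding w_def using assms by (intro fs_lc fs_simple)
  have fv': "fs v'" unfolding v'_def by (rule fs_lc[OF assms(5) fw])
  have Baw: "B (simple_root a) w = c1 - c * c2"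
    unfolding w_def using assms by (simp add: B_lc_right fs_simple B_simple_self B_ab c_def)
  have Bbw: "B (simple_root b) w = c2 - c * c1"
    unfolding w_def using assms by (simp add: B_lc_right fs_simple B_simple_self B_ab c_def cc_sym)
  have "B (simple_root a) v' = p - (c1 - c * c2)"
    unfolding v'_def using fw assms(5) by (simp add: B_lc_right Baw p_def)
  also have "\<dots> = 0"
  proof -
    have "(p + c*q) - c*(q + c*p) = p * D" by (simp add: D_def algebra_simps power2_eq_square)
    moreover have "c1 - c * c2 = ((p + c*q) - c*(q + c*p)) / D" unfolding c1_def c2_def by (simp add: diff_divide_distrib)
    ultimately show ?thesis using D0 by simp
  qed
  finally have a0: "B (simple_root a) v' = 0" .
  have "B (simple_root b) v' = q - (c2 - c * c1)"
    unfolding v'_def using fw assms(5) by (simp add: B_lc_right Bbw q_def)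
  also have "\<dots> = 0"
  proof -
    have "(q + c*p) - c*(p + c*q) = q * D" by (simp add: D_def algebra_simps power2_eq_square)
    moreover have "c2 - c * c1 = ((q + c*p) - c*(p + c*q)) / D" unfolding c1_def c2_def by (simp add: diff_divide_distrib)
    ultimately show ?thesis using D0 by simp
  qed
  finally have b0: "B (simple_root b) v' = 0" .
  have "v = lc 1 w 1 v'" by (simp add: v'_def lc_def fun_eq_iff)
  then show ?thesis using fv' a0 b0 unfolding w_def by blast
qed

lemma prodw_fix:
  assumes "set ws \<subseteq> {a, b}" "B (simple_root a) v = 0" "B (simple_root b) v = 0"
  shows "prodw ws v = v"
  using assms(1)
proof (induction ws)
  case Nil then show ?case by simp
next
  case (Cons s ws)
  then have "s = a \<or> s = b" "prodw ws v = v" by auto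
  then show ?case using assms(2,3) by (auto simp: sref_def)
qed

lemma Lin_eq_ab:
  assumes "a \<in> S" "b \<in> S" "a \<noteq> b" "(cc a b)\<^sup>2 \<noteq> 1" "Lin f" "Lin g"
    and "\<And>v. fs v \<Longrightarrow> B (simple_root a) v = 0 \<Longrightarrow> B (simple_root b) v = 0 \<Longrightarrow> f v = v \<and> g v = v"
    and "f (simple_root a) = g (simple_root a)" "f (simple_root b) = g (simple_root b)"
  shows "f = g"
proof
  fix v
  show "f v = g v"
  proof (cases "fs v")
    case False then show ?thesis using assms(5,6) by (simp add: Lin_def)
  next
    case True
    then obtain c1 c2 v' where v': "fs v'" "B (simple_root a) v' = 0" "B (simple_root b) v' = 0"
      "v = lc 1 (lc c1 (simple_root a) c2 (simple_root b)) 1 v'"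
      using decomp[OF assms(1-4)] by blast
    have fw: "fs (lc c1 (simple_root a) c2 (simple_root b))" using assms by (intro fs_lc fs_simple)
    have "f v = lc 1 (lc c1 (f (simple_root a)) c2 (f (simple_root b))) 1 (f v')"
      using assms(5) v'(1,4) fw fs_simple assms(1,2) unfolding Lin_def by simp
    moreover have "g v = lc 1 (lc c1 (g (simple_root a)) c2 (g (simple_root b))) 1 (g v')"
      using assms(6) v'(1,4) fw fs_simple assms(1,2) unfolding Lin_def by simp
    ultimately show ?thesis using assms(7)[OF v'(1-3)] assms(8,9) by simp
  qed
qed

lemma altw_setS: "a \<in> S \<Longrightarrow> b \<in> S \<Longrightarrow> set (altw a b n) \<subseteq> S"
  using altw_set[of a b n] by auto

lemma lc_neg: "lc (-1) u 0 w = - u" by (simp add: lc_def fun_eq_iff)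

lemma alt_M_a:
  assumes "a \<in> S" "b \<in> S" "a \<noteq> b" "k \<ge> 1" "cc a b = cos (pi / real (2 * k))"
  shows "prodw (altw a b (2 * k)) (simple_root a) = - simple_root a"
  using alt_formula[OF assms(1-3), of "2 * k"] U_fin_facts[OF assms(4)] assms(5)
  by (simp add: lc_def fun_eq_iff)

lemma alt_M_b:
  assumes "a \<in> S" "b \<in> S" "a \<noteq> b" "k \<ge> 1" "cc a b = cos (pi / real (2 * k))"
  shows "prodw (altw a b (2 * k)) (simple_root b) = - simple_root b"
proof -
  obtain j where j: "2 * k = Suc j" using assms(4) by (cases k) auto
  have oj: "odd j" using j by presburger
  have jj: "j = 2 * k - 1" using j by simp
  have "prodw (altw a b (2 * k)) (simple_root b) = prodw (altw b a j) (sref S m b (simple_root b))"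
    unfolding j by (simp add: prodw_append)
  also have "sref S m b (simple_root b) = lc (-1) (simple_root b) 0 (simple_root a)"
    using sref_simple_self[OF cox assms(2)] by (simp add: lc_neg)
  also have "prodw (altw b a j) \<dots> = lc (-1) (prodw (altw b a j) (simple_root b)) 0 (prodw (altw b a j) (simple_root a))"
  proof -
    have "Lin (prodw (altw b a j))" using prodw_Lin altw_setS assms(1,2) by blast
    then show ?thesis using assms fs_simple unfolding Lin_def by auto
  qed
  also have "prodw (altw b a j) (simple_root b) = simple_root b"
  proof -
    have e: "prodw (altw b a j) (simple_root b) = lc (U (cc a b) j) (simple_root b) (U (cc a b) (Suc j)) (simple_root a)"
      using alt_formula[OF assms(2,1) assms(3)[symmetric], of j] oj cc_sym[OF assms(1,2)] by simp
    have u1: "U (cc a b) j = 1" using U_fin_facts(5)[OF assms(4)] assms(5) jj by simp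
    have u0: "U (cc a b) (Suc j) = 0" using U_fin_facts(3)[OF assms(4)] assms(5) j[symmetric] by simp
    show ?thesis unfolding e u1 u0 by (simp add: lc_def fun_eq_iff)
  qed
  finally show ?thesis by (simp add: lc_neg fun_eq_iff)
qed

lemma braid:
  assumes "a \<in> S" "b \<in> S" "a \<noteq> b" "k \<ge> 1" "cc a b = cos (pi / real (2 * k))"
  shows "prodw (altw a b (2 * k)) = prodw (altw b a (2 * k))"
proof (rule Lin_eq_ab[OF assms(1-3)])
  show "(cc a b)\<^sup>2 \<noteq> 1" using U_fin_facts[OF assms(4)] assms(5) by simp
  show "Lin (prodw (altw a b (2 * k)))" "Lin (prodw (altw b a (2 * k)))"
    using altw_setS assms(1,2) by (auto intro!: prodw_Lin)
  show "prodw (altw a b (2 * k)) v = v \<and> prodw (altw b a (2 * k)) v = v"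
    if "B (simple_root a) v = 0" "B (simple_root b) v = 0" for v
    using prodw_fix[OF altw_set that] prodw_fix[OF _ that, of "altw b a (2*k)"] altw_set[of b a] by auto
  have cs: "cc b a = cos (pi / real (2 * k))" using assms cc_sym by simp
  show "prodw (altw a b (2 * k)) (simple_root a) = prodw (altw b a (2 * k)) (simple_root a)"
    using alt_M_a[OF assms] alt_M_b[OF assms(2,1) _ assms(4) cs] assms(3) by simp
  show "prodw (altw a b (2 * k)) (simple_root b) = prodw (altw b a (2 * k)) (simple_root b)"
    using alt_M_b[OF assms] alt_M_a[OF assms(2,1) _ assms(4) cs] assms(3) by simp
qed

end


context ecox
begin

lemma reduced_no_dup:
  assumes "set ws \<subseteq> A" "A \<subseteq> S" "length ws = len A (prodw ws)"
  shows "\<not> (\<exists>xs ys c. ws = xs @ [c, c] @ ys)"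
proof
  assume "\<exists>xs ys c. ws = xs @ [c, c] @ ys"
  then obtain xs ys c where e: "ws = xs @ [c, c] @ ys" by blast
  have cS: "c \<in> S" using e assms by auto
  have "prodw ws = prodw (xs @ ys)"
  proof -
    have "prodw ws = prodw xs \<circ> (sref S m c \<circ> sref S m c) \<circ> prodw ys"
      using e by (simp add: prodw_append comp_assoc)
    then show ?thesis using sref_sref[OF cS] by (simp add: prodw_append)
  qed
  then have "len A (prodw ws) \<le> length (xs @ ys)" using len_le[of "xs @ ys" A] e assms(1) by simp
  then show False using e assms(3) by simp
qed

lemma dihedral:
  assumes "a \<in> S" "b \<in> S" "a \<noteq> b" "u \<in> genA {a, b}"
    and "len {a, b} (u \<circ> sref S m a) \<ge> len {a, b} u"
  shows "\<exists>p q. p \<ge> 0 \<and> q \<ge> 0 \<and> u (simple_root a) = lc p (simple_root a) q (simple_root b)"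
proof -
  let ?I = "{a, b}"
  have IS: "?I \<subseteq> S" using assms by auto
  obtain ws where ws: "set ws \<subseteq> ?I" "length ws = len ?I u" "prodw ws = u" using len_ex[OF assms(4)] by blast
  define n where "n = length ws"
  have nd: "\<not> (\<exists>xs ys c. ws = xs @ [c, c] @ ys)" using reduced_no_dup[OF ws(1) IS] ws by simp
  have lst: "ws = [] \<or> last ws = b"
  proof (rule ccontr)
    assume "\<not> (ws = [] \<or> last ws = b)"
    then obtain xs where xs: "ws = xs @ [a]" using ws(1) by (cases ws rule: rev_cases) auto
    have e: "u = prodw xs \<circ> sref S m a" using ws(3) xs by (simp add: prodw_append)
    then have "u \<circ> sref S m a = prodw xs \<circ> (sref S m a \<circ> sref S m a)" by (simp only: comp_assoc)
    then have "u \<circ> sref S m a = prodw xs" using sref_sref[OF assms(1)] by simp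
    then have "len ?I (u \<circ> sref S m a) \<le> length xs" using len_le[of xs ?I] ws(1) xs by simp
    then show False using assms(5) ws(2) xs by simp
  qed
  have wsalt: "ws = altw a b n" using altw_char[OF ws(1) assms(3) nd lst] n_def by simp
  have form: "u (simple_root a) =
    (if even n then lc (U (cc a b) (Suc n)) (simple_root a) (U (cc a b) n) (simple_root b)
     else lc (U (cc a b) n) (simple_root a) (U (cc a b) (Suc n)) (simple_root b))"
    using alt_formula[OF assms(1-3), of n] ws(3) wsalt by simp
  show ?thesis
  proof (cases rule: m_cases[OF assms(1-3)])
    case 1
    have "U (cc a b) n \<ge> 0" "U (cc a b) (Suc n) \<ge> 0" using 1 by (simp_all add: U_one)
    then show ?thesis using form by (auto split: if_splits)
  next
    case (2 k)
    have nM: "n < 2 * k"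
    proof (rule ccontr)
      assume "\<not> n < 2 * k"
      then obtain r where r: "n = r + 2 * k" by (metis add.commute le_add_diff_inverse not_less)
      obtain j where j: "2 * k = Suc j" using 2 by (cases k) auto
      have "ws = altw a b r @ altw a b (2 * k)" using wsalt r altw_add[of a b r "2 * k"] by simp
      also have "prodw \<dots> = prodw (altw a b r) \<circ> prodw (altw b a (2 * k))"
        using braid[OF assms(1-3) 2(1) 2(3)] by (simp add: prodw_append)
      also have "altw b a (2 * k) = altw a b j @ [a]" using j by simp
      finally have "prodw ws = prodw (altw a b r) \<circ> prodw (altw a b j @ [a])" .
      then have "u = prodw (altw a b r @ altw a b j) \<circ> sref S m a" using ws(3) by (simp add: prodw_append comp_assoc)
      then have "u \<circ> sref S m a = prodw (altw a b r @ altw a b j) \<circ> (sref S m a \<circ> sref S m a)" by (simp only: comp_assoc)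
      then have "u \<circ> sref S m a = prodw (altw a b r @ altw a b j)"
        using sref_sref[OF assms(1)] by simp
      then have "len ?I (u \<circ> sref S m a) \<le> r + j"
        using len_le[of "altw a b r @ altw a b j" ?I] altw_set[of a b] by auto
      then show False using assms(5) ws(2) n_def r j by simp
    qed
    have "U (cc a b) n \<ge> 0" "U (cc a b) (Suc n) \<ge> 0"
      using U_fin_facts(1)[OF 2(1)] 2(3) nM by auto
    then show ?thesis using form by (auto split: if_splits)
  qed
qed

end


context ecox
begin

definition pos :: "('a \<Rightarrow> real) \<Rightarrow> bool" where "pos v \<longleftrightarrow> (\<forall>t\<in>S. v t \<ge> 0)"

lemma genA_Lin: "w \<in> genA S \<Longrightarrow> Lin w"
  unfolding genA_def using prodw_Lin by blast

lemma len_zero: "w \<in> genA A \<Longrightarrow> len A w = 0 \<Longrightarrow> w = id"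
  using len_ex[of w A] by auto

lemma posthm:
  "w \<in> genA S \<Longrightarrow> s \<in> S \<Longrightarrow> len S (w \<circ> sref S m s) \<ge> len S w \<Longrightarrow> pos (w (simple_root s))"
proof (induction "len S w" arbitrary: w s rule: less_induct)
  case less
  show ?case
  proof (cases "len S w = 0")
    case True
    then have "w = id" using len_zero less.prems by blast
    then show ?thesis by (simp add: pos_def simple_root_def)
  next
    case False
    obtain ws where ws: "set ws \<subseteq> S" "length ws = len S w" "prodw ws = w" using len_ex[OF less.prems(1)] by blast
    then obtain xs s' where xs: "ws = xs @ [s']" using False by (cases ws rule: rev_cases) auto
    have s'S: "s' \<in> S" using ws xs by auto
    have xsS: "set xs \<subseteq> S" using ws xs by auto
    have wxs: "w \<circ> sref S m s' = prodw xs"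
    proof -
      have "w = prodw xs \<circ> sref S m s'" using ws(3) xs by (simp add: prodw_append)
      then have "w \<circ> sref S m s' = prodw xs \<circ> (sref S m s' \<circ> sref S m s')" by (simp only: comp_assoc)
      then show ?thesis using sref_sref[OF s'S] by simp
    qed
    have lws': "len S (w \<circ> sref S m s') < len S w"
      using wxs len_le[OF xsS] ws(2) xs by simp
    have ss': "s \<noteq> s'" using lws' less.prems(3) by auto
    define I where "I = {s, s'}"
    have IS: "I \<subseteq> S" using less.prems(2) s'S by (auto simp: I_def)
    define P where "P = (\<lambda>v. v \<in> genA S \<and> (\<exists>vI\<in>genA I. w = v \<circ> vI \<and> len S v + len I vI \<le> len S w))"
    have w'gen: "w \<circ> sref S m s' \<in> genA S" using wxs xsS unfolding genA_def by blast
    have "P (w \<circ> sref S m s')"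
    proof -
      have "w = (w \<circ> sref S m s') \<circ> sref S m s'" using sref_sref[OF s'S] by (simp add: comp_assoc)
      moreover have "sref S m s' \<in> genA I" by (rule genA_sref) (simp add: I_def)
      moreover have "len I (sref S m s') \<le> 1" by (rule len_sref) (simp add: I_def)
      ultimately show ?thesis unfolding P_def using w'gen lws' by force
    qed
    then obtain v where Pv: "P v" and vmin: "\<And>y. P y \<Longrightarrow> len S v \<le> len S y"
      using ex_has_least_nat[of P "w \<circ> sref S m s'" "len S"] by blast
    obtain vI where vI: "vI \<in> genA I" "w = v \<circ> vI" "len S v + len I vI \<le> len S w" and vgen: "v \<in> genA S"
      using Pv unfolding P_def by blast
    have lv: "len S v < len S w" using vmin[OF \<open>P (w \<circ> sref S m s')\<close>] lws' by simp
    have desc: "len S (v \<circ> sref S m r) \<ge> len S v" if rI: "r \<in> I" for r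
    proof (rule ccontr)
      assume "\<not> len S (v \<circ> sref S m r) \<ge> len S v"
      then have lt: "len S (v \<circ> sref S m r) < len S v" by simp
      have rS: "r \<in> S" using rI IS by auto
      have "P (v \<circ> sref S m r)"
      proof -
        have g1: "v \<circ> sref S m r \<in> genA S" using vgen genA_comp genA_sref rS by blast
        have g2: "sref S m r \<circ> vI \<in> genA I" using vI(1) genA_comp genA_sref rI by blast
        have e: "w = (v \<circ> sref S m r) \<circ> (sref S m r \<circ> vI)"
          using vI(2) sref_sref[OF rS] by (simp add: comp_assoc[symmetric]) (simp add: comp_assoc)
        have "len I (sref S m r \<circ> vI) \<le> len I (sref S m r) + len I vI"
          by (rule len_comp[OF genA_sref[OF rI] vI(1)])
        moreover have "len I (sref S m r) \<le> 1" by (rule len_sref[OF rI])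
        ultimately have "len S (v \<circ> sref S m r) + len I (sref S m r \<circ> vI) \<le> len S w"
          using lt vI(3) by linarith
        then show ?thesis unfolding P_def using g1 g2 e by blast
      qed
      then show False using vmin lt by fastforce
    qed
    have pa: "pos (v (simple_root s))" using less.hyps[OF lv vgen less.prems(2) desc] by (simp add: I_def)
    have pb: "pos (v (simple_root s'))" using less.hyps[OF lv vgen s'S desc] by (simp add: I_def)
    have dI: "len I (vI \<circ> sref S m s) \<ge> len I vI"
    proof (rule ccontr)
      assume "\<not> len I (vI \<circ> sref S m s) \<ge> len I vI"
      then have lt: "len I (vI \<circ> sref S m s) < len I vI" by simp
      have g: "vI \<circ> sref S m s \<in> genA I" using vI(1) genA_comp genA_sref by (auto simp: I_def)
      have e: "w \<circ> sref S m s = v \<circ> (vI \<circ> sref S m s)" using vI(2) by (simp add: comp_assoc)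
      have "len S (v \<circ> (vI \<circ> sref S m s)) \<le> len S v + len S (vI \<circ> sref S m s)"
        using len_comp[OF vgen] g genA_mono[OF IS] by blast
      then have "len S (w \<circ> sref S m s) \<le> len S v + len S (vI \<circ> sref S m s)" unfolding e .
      moreover have "len S (vI \<circ> sref S m s) \<le> len I (vI \<circ> sref S m s)" using len_mono[OF g IS] .
      ultimately have "len S (w \<circ> sref S m s) < len S w" using lt vI(3) by linarith
      then show False using less.prems(3) by simp
    qed
    obtain p q where pq: "p \<ge> 0" "q \<ge> 0" "vI (simple_root s) = lc p (simple_root s) q (simple_root s')"
      using dihedral[OF less.prems(2) s'S ss', of vI] vI(1) dI unfolding I_def by blast
    have "w (simple_root s) = v (lc p (simple_root s) q (simple_root s'))" using vI(2) pq(3) by simp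
    also have "\<dots> = lc p (v (simple_root s)) q (v (simple_root s'))"
      using genA_Lin[OF vgen] fs_simple[OF less.prems(2)] fs_simple[OF s'S] by (simp add: Lin_def)
    finally show ?thesis using pa pb pq unfolding pos_def lc_def by simp
  qed
qed

lemma Lin_neg: "Lin w \<Longrightarrow> fs v \<Longrightarrow> w (- v) = - w v"
  using lc_neg[of v v] unfolding Lin_def by (metis lc_neg)

lemma rootsign:
  assumes "w \<in> genA S" "s \<in> S"
  shows "pos (w (simple_root s)) \<or> pos (- w (simple_root s))"
proof (cases "len S (w \<circ> sref S m s) \<ge> len S w")
  case True then show ?thesis using posthm assms by blast
next
  case False
  have g: "w \<circ> sref S m s \<in> genA S" using assms genA_comp genA_sref by blast
  have "len S (w \<circ> sref S m s \<circ> sref S m s) = len S w" using sref_sref[OF assms(2)] by (simp add: comp_assoc)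
  then have "pos ((w \<circ> sref S m s) (simple_root s))" using posthm[OF g assms(2)] False by simp
  moreover have "(w \<circ> sref S m s) (simple_root s) = - w (simple_root s)"
    using sref_simple_self[OF cox assms(2)] Lin_neg[OF genA_Lin[OF assms(1)] fs_simple[OF assms(2)]] by simp
  ultimately show ?thesis by simp
qed

lemma len_inv: "w \<in> genA S \<Longrightarrow> len S (inv w) = len S w"
proof -
  have le: "len S (inv w) \<le> len S w" if wg: "w \<in> genA S" for w
  proof -
    obtain ws where ws: "set ws \<subseteq> S" "length ws = len S w" "prodw ws = w" using len_ex[OF wg] by blast
    then have "inv w = prodw (rev ws)" using prodw_rev by simp
    then show ?thesis using len_le[of "rev ws" S] ws by simp
  qed
  assume w: "w \<in> genA S"
  have iw: "inv w \<in> genA S"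
  proof -
    obtain ws where ws: "set ws \<subseteq> S" "prodw ws = w" using w unfolding genA_def by blast
    then show ?thesis unfolding genA_def using prodw_rev[OF ws(1)] by (intro CollectI exI[of _ "rev ws"]) auto
  qed
  have "inv (inv w) = w" using genA_Lin[OF w] by (simp add: Lin_def inv_inv_eq)
  then show ?thesis using le[OF w] le[OF iw] by simp
qed

end


context ecox
begin

definition root :: "('a \<Rightarrow> real) \<Rightarrow> bool" where
  "root g \<longleftrightarrow> (\<exists>w s. w \<in> genA S \<and> s \<in> S \<and> g = w (simple_root s))"

lemma root_fs: "root g \<Longrightarrow> fs g"
  unfolding root_def using genA_Lin fs_simple unfolding Lin_def by blast

lemma root_BB: "root g \<Longrightarrow> B g g = 1"
  unfolding root_def using genA_Lin fs_simple B_simple_self unfolding Lin_def by metis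

lemma prodw_outside: "set ws \<subseteq> S \<Longrightarrow> t \<notin> S \<Longrightarrow> prodw ws v t = v t"
proof (induction ws arbitrary: v)
  case Nil then show ?case by simp
next
  case (Cons s ws)
  then have "s \<noteq> t" by auto
  then show ?case using Cons by (simp add: sref_def simple_root_def)
qed

lemma root_out: "root g \<Longrightarrow> t \<notin> S \<Longrightarrow> g t = 0"
  unfolding root_def genA_def using prodw_outside by (force simp: simple_root_def)

lemma root_sign: "root g \<Longrightarrow> pos g \<or> pos (- g)"
  unfolding root_def using rootsign by blast

lemma root_sref: "root g \<Longrightarrow> t \<in> S \<Longrightarrow> root (sref S m t g)"
  unfolding root_def using genA_comp genA_sref by (metis comp_apply)

lemma root_simple: "s \<in> S \<Longrightarrow> root (simple_root s)"
  unfolding root_def using genA_id by (metis id_apply)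

lemma root_neg: "root g \<Longrightarrow> root (- g)"
proof -
  assume "root g"
  then obtain w s where ws: "w \<in> genA S" "s \<in> S" "g = w (simple_root s)" unfolding root_def by blast
  have "(w \<circ> sref S m s) (simple_root s) = - g"
    using sref_simple_self[OF cox ws(2)] Lin_neg[OF genA_Lin[OF ws(1)] fs_simple[OF ws(2)]] ws(3) by simp
  then show ?thesis unfolding root_def using ws genA_comp genA_sref by metis
qed

lemma genA_inv: "w \<in> genA S \<Longrightarrow> inv w \<in> genA S"
proof -
  assume w: "w \<in> genA S"
  obtain ws where ws: "set ws \<subseteq> S" "prodw ws = w" using w unfolding genA_def by blast
  then show ?thesis unfolding genA_def using prodw_rev[OF ws(1)] by (intro CollectI exI[of _ "rev ws"]) auto
qed

lemma refl_root_conj: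
  assumes "w \<in> genA S" "s \<in> S"
  shows "refl (w (simple_root s)) = w \<circ> sref S m s \<circ> inv w"
  using refl_conj[OF genA_Lin[OF assms(1)] fs_simple[OF assms(2)]] by (simp add: sref_refl)

lemma refl_gen: "root g \<Longrightarrow> refl g \<in> genA S"
proof -
  assume "root g"
  then obtain w s where ws: "w \<in> genA S" "s \<in> S" "g = w (simple_root s)" unfolding root_def by blast
  then show ?thesis using refl_root_conj genA_comp genA_sref genA_inv by metis
qed

lemma refl_neg: "refl (- g) = refl g"
proof -
  have "vsupp S (- g) = vsupp S g" by (auto simp: vsupp_def)
  then have "B (- g) v = - B g v" for v by (simp add: bform_def sum_negf)
  then show ?thesis by (simp add: refl_def fun_eq_iff)
qed

lemma refl_inv: "root g \<Longrightarrow> inv (refl g) = refl g"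
proof -
  assume r: "root g"
  have "refl g \<circ> refl g = id" using refl_invol[OF root_fs[OF r] root_BB[OF r]] by (simp add: fun_eq_iff)
  then show ?thesis by (simp add: inv_unique_comp)
qed

lemma sref_inv: "t \<in> S \<Longrightarrow> inv (sref S m t) = sref S m t"
  using sref_sref inv_unique_comp by metis

lemma refl_sref_conj: "root g \<Longrightarrow> t \<in> S \<Longrightarrow> sref S m t \<circ> refl g \<circ> sref S m t = refl (sref S m t g)"
  using refl_conj[OF sref_Lin root_fs] sref_inv by metis

lemma pos_not_both: "root g \<Longrightarrow> pos g \<Longrightarrow> pos (- g) \<Longrightarrow> False"
proof -
  assume r: "root g" "pos g" "pos (- g)"
  then have "vsupp S g = {}" by (force simp: pos_def vsupp_def)
  then have "B g g = 0" by (simp add: bform_def)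
  then show False using root_BB[OF r(1)] by simp
qed

lemma pos_coord: "root g \<Longrightarrow> pos g \<Longrightarrow> r \<in> S \<Longrightarrow> g r \<noteq> 0 \<Longrightarrow> g r > 0"
  unfolding pos_def by force

lemma factB:
  assumes "root g" "pos g"
  shows "\<exists>t\<in>S. g t > 0 \<and> B (simple_root t) g > 0"
proof (rule ccontr)
  assume na: "\<not> ?thesis"
  let ?A = "vsupp S g"
  have fA: "finite ?A" "?A \<subseteq> S" using root_fs[OF assms(1)] by (auto simp: fs_def vsupp_def)
  have "B g g = (\<Sum>s\<in>?A. \<Sum>t\<in>?A. g s * g t * bcoef m s t)"
    by (rule B_expand[OF fA subset_refl fA subset_refl])
  also have "\<dots> = (\<Sum>s\<in>?A. g s * B (simple_root s) g)"
  proof (intro sum.cong refl)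
    fix s assume s: "s \<in> ?A"
    then have "B (simple_root s) g = (\<Sum>t\<in>?A. g t * bcoef m s t)"
      using fA by (intro bform_simple_left_fin) auto
    then show "(\<Sum>t\<in>?A. g s * g t * bcoef m s t) = g s * B (simple_root s) g"
      by (simp add: sum_distrib_left mult.assoc)
  qed
  also have "\<dots> \<le> 0"
  proof (intro sum_nonpos)
    fix s assume s: "s \<in> ?A"
    then have "g s > 0" using pos_coord[OF assms] by (auto simp: vsupp_def)
    then have "B (simple_root s) g \<le> 0" using na s by (auto simp: vsupp_def)
    then show "g s * B (simple_root s) g \<le> 0" using \<open>g s > 0\<close> by (simp add: mult_nonneg_nonpos)
  qed
  finally show False using root_BB[OF assms(1)] by simp
qed

lemma sref_coord_other: "r \<noteq> t \<Longrightarrow> sref S m t v r = v r"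
  by (simp add: sref_def simple_root_def)

lemma descent:
  assumes r: "root g" and pg: "pos g" and tS: "t \<in> S" and p: "B (simple_root t) g > 0"
    and r': "r' \<in> S" "r' \<noteq> t" "g r' \<noteq> 0"
  shows "pos (sref S m t g) \<and> len S (refl (sref S m t g)) < len S (refl g)"
proof -
  define R where "R = refl g"
  define pp where "pp = B (simple_root t) g"
  have Rg: "R \<in> genA S" using refl_gen[OF r] by (simp add: R_def)
  have gr': "g r' > 0" using pos_coord[OF r pg r'(1,3)] .
  have Rat: "R (simple_root t) = lc 1 (simple_root t) (- 2 * pp) g"
    by (simp add: R_def refl_lc pp_def B_sym)
  have "\<not> pos (R (simple_root t))"
  proof
    assume "pos (R (simple_root t))"
    then have "R (simple_root t) r' \<ge> 0" using r' by (simp add: pos_def)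
    moreover have "R (simple_root t) r' = - 2 * pp * g r'" using Rat r'(2) by (simp add: lc_def simple_root_def)
    moreover have "pp * g r' > 0" using gr' p by (simp add: pp_def)
    ultimately show False by simp
  qed
  then have l1: "len S (R \<circ> sref S m t) < len S R" using posthm[OF Rg tS] by force
  have rt: "root (sref S m t g)" using root_sref[OF r tS] .
  have "(sref S m t g) r' > 0" using gr' sref_coord_other r'(2) by simp
  then have ptg: "pos (sref S m t g)" using root_sign[OF rt] r'(1) by (force simp: pos_def)
  have tRg: "sref S m t \<circ> R \<in> genA S" using genA_comp[OF genA_sref[OF tS] Rg] .
  have "(sref S m t \<circ> R) (simple_root t) = lc 1 (sref S m t (simple_root t)) (- 2 * pp) (sref S m t g)"
    using Rat sref_Lin[OF tS] fs_simple[OF tS] root_fs[OF r] unfolding Lin_def by simp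
  also have "sref S m t (simple_root t) = - simple_root t" using sref_simple_self[OF cox tS] .
  finally have e: "(sref S m t \<circ> R) (simple_root t) = lc 1 (- simple_root t) (- 2 * pp) (sref S m t g)" .
  have "\<not> pos ((sref S m t \<circ> R) (simple_root t))"
  proof
    assume "pos ((sref S m t \<circ> R) (simple_root t))"
    then have "(sref S m t \<circ> R) (simple_root t) t \<ge> 0" using tS by (simp add: pos_def)
    moreover have "sref S m t g t \<ge> 0" using ptg tS by (simp add: pos_def)
    ultimately show False using e p unfolding pp_def lc_def simple_root_def
      by simp (smt (verit) mult_nonneg_nonneg)
  qed
  then have l2: "len S (sref S m t \<circ> R \<circ> sref S m t) < len S (sref S m t \<circ> R)"
    using posthm[OF tRg tS] by force
  have "inv (sref S m t \<circ> R) = R \<circ> sref S m t"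
  proof -
    have "bij (sref S m t)" "bij R" using sref_bij[OF cox tS] genA_Lin[OF Rg] by (auto simp: Lin_def)
    then have "inv (sref S m t \<circ> R) = inv R \<circ> inv (sref S m t)" by (simp add: o_inv_distrib)
    then show ?thesis using refl_inv[OF r] sref_inv[OF tS] by (simp add: R_def)
  qed
  then have l3: "len S (sref S m t \<circ> R) = len S (R \<circ> sref S m t)" using len_inv[OF tRg] by simp
  have "refl (sref S m t g) = sref S m t \<circ> R \<circ> sref S m t" using refl_sref_conj[OF r tS] by (simp add: R_def)
  then show ?thesis using l1 l2 l3 ptg by (simp add: R_def)
qed

end


context ecox
begin

definition nxt :: "'a \<Rightarrow> 'a \<Rightarrow> nat \<Rightarrow> 'a" where "nxt x t i = (if even i then t else x)"
definition prv :: "'a \<Rightarrow> 'a \<Rightarrow> nat \<Rightarrow> 'a" where "prv x t i = (if even i then x else t)"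

lemma sref_lc: "sref S m g v = lc 1 v (- 2 * B (simple_root g) v) (simple_root g)"
  by (simp add: sref_refl refl_lc)

lemma chain:
  assumes xS: "x \<in> S" and tS: "t \<in> S" and xt: "x \<noteq> t"
    and r: "root g" and pg: "pos g" and gx: "B (simple_root x) g = 0"
    and p: "B (simple_root t) g > 0"
    and r': "r' \<in> S" "r' \<noteq> x" "r' \<noteq> t" "g r' \<noteq> 0"
  shows "(\<forall>j. 1 \<le> j \<and> j \<le> i \<longrightarrow> U (cc x t) j > 0) \<Longrightarrow>
    root (prodw (altw x t i) g) \<and> pos (prodw (altw x t i) g) \<and> prodw (altw x t i) g r' \<noteq> 0 \<and>
    B (simple_root (nxt x t i)) (prodw (altw x t i) g) = B (simple_root t) g * U (cc x t) (Suc i) \<and>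
    B (simple_root (prv x t i)) (prodw (altw x t i) g) = - (B (simple_root t) g * U (cc x t) i) \<and>
    len S (refl (prodw (altw x t i) g)) + i \<le> len S (refl g)"
proof (induction i)
  case 0
  then show ?case using r pg r' gx by (simp add: nxt_def prv_def)
next
  case (Suc i)
  define c where "c = cc x t"
  define pp where "pp = B (simple_root t) g"
  define gi where "gi = prodw (altw x t i) g"
  define a where "a = nxt x t i"
  define h where "h = prv x t i"
  have aS: "a \<in> S" and hS: "h \<in> S" and ah: "a \<noteq> h" using xS tS xt by (auto simp: a_def h_def nxt_def prv_def)
  have cah: "cc a h = c" using cc_sym xS tS by (auto simp: a_def h_def nxt_def prv_def c_def)
  have IH: "root gi" "pos gi" "gi r' \<noteq> 0" "B (simple_root a) gi = pp * U c (Suc i)"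
      "B (simple_root h) gi = - (pp * U c i)" "len S (refl gi) + i \<le> len S (refl g)"
    using Suc by (auto simp: gi_def a_def h_def c_def pp_def)
  have Upos: "U c (Suc i) > 0" using Suc.prems by (simp add: c_def)
  have next_eq: "prodw (altw x t (Suc i)) g = sref S m a gi"
    by (simp add: altw_Suc_front a_def nxt_def gi_def del: altw.simps(2))
  have ppos: "pp > 0" using p by (simp add: pp_def)
  have Bagi: "B (simple_root a) gi > 0" using IH(4) ppos Upos by simp
  have r'a: "r' \<noteq> a" using r' by (auto simp: a_def nxt_def)
  have d: "pos (sref S m a gi) \<and> len S (refl (sref S m a gi)) < len S (refl gi)"
    using descent[OF IH(1,2) aS Bagi r'(1) r'a IH(3)] .
  have fgi: "fs gi" using root_fs[OF IH(1)] .
  have B1: "B (simple_root a) (sref S m a gi) = - (pp * U c (Suc i))"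
    unfolding sref_lc using fgi fs_simple[OF aS] IH(4)
    by (simp add: B_lc_right B_simple_self[OF aS])
  have B2: "B (simple_root h) (sref S m a gi) = pp * U c (Suc (Suc i))"
  proof -
    have "B (simple_root h) (sref S m a gi) = B (simple_root h) gi - 2 * B (simple_root a) gi * B (simple_root h) (simple_root a)"
      unfolding sref_lc using fgi fs_simple[OF aS] by (simp add: B_lc_right)
    also have "B (simple_root h) (simple_root a) = - c" using B_ab[OF hS aS] cah cc_sym[OF aS hS] by simp
    finally show ?thesis using IH(4,5) by (simp add: algebra_simps)
  qed
  have nx: "nxt x t (Suc i) = h" "prv x t (Suc i) = a" by (auto simp: nxt_def prv_def a_def h_def)
  show ?case unfolding next_eq nx
    using root_sref[OF IH(1) aS] d IH(3,6) sref_coord_other[OF r'a] B1 B2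
    by (simp add: c_def pp_def)
qed

end


context ecox
begin

definition eta :: "'a \<Rightarrow> 'a \<Rightarrow> ('a \<Rightarrow> real)" where
  "eta x t = lc (cc x t / sin (pi / real (the_enat (m x t)))) (simple_root x)
                (1 / sin (pi / real (the_enat (m x t)))) (simple_root t)"

context
  fixes x t :: 'a and k :: nat
  assumes xS: "x \<in> S" and tS: "t \<in> S" and xt: "x \<noteq> t" and k1: "k \<ge> 1"
    and mxt: "m x t = enat (2 * k)" and cxt: "cc x t = cos (pi / real (2 * k))"
begin

abbreviation "sn \<equiv> sin (pi / real (2 * k))"
abbreviation "cs \<equiv> cos (pi / real (2 * k))"

lemma sn_pos: "sn > 0" using U_fin(1)[OF k1] .

lemma cs_sn: "1 - cs\<^sup>2 = sn\<^sup>2" using sin_squared_eq[of "pi / real (2 * k)"] by simp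

lemma ctx: "cc t x = cs" using cc_sym[OF xS tS] cxt by simp

lemma eta_eq: "eta x t = lc (cs / sn) (simple_root x) (1 / sn) (simple_root t)"
  by (simp add: eta_def mxt cxt)

lemma eta_fs: "fs (eta x t)"
  unfolding eta_eq by (intro fs_lc fs_simple xS tS)

lemma eta_Bx: "B (simple_root x) (eta x t) = 0"
  unfolding eta_eq using xS tS
  by (simp add: B_lc_right fs_simple B_simple_self B_ab cxt)

lemma eta_Bt: "B (simple_root t) (eta x t) = sn"
proof -
  have "B (simple_root t) (eta x t) = (cs / sn) * (- cs) + 1 / sn"
    unfolding eta_eq using xS tS cc_sym[OF xS tS]
    by (simp add: B_lc_right fs_simple B_simple_self B_ab cxt)
  also have "\<dots> = (1 - cs\<^sup>2) / sn" using sn_pos by (simp add: field_simps power2_eq_square)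
  also have "\<dots> = sn" unfolding cs_sn using sn_pos by (simp add: power2_eq_square)
  finally show ?thesis .
qed

lemma eta_BB: "B (eta x t) (eta x t) = 1"
proof -
  have "B (eta x t) (eta x t) = (cs / sn) * B (simple_root x) (eta x t) + (1 / sn) * B (simple_root t) (eta x t)"
    by (subst (1) eta_eq) (simp add: B_lc_left fs_simple xS tS)
  then show ?thesis using eta_Bx eta_Bt sn_pos by simp
qed

lemma U2k2: "U cs (2 * k - 2) = 2 * cs"
proof -
  have e: "2 * k = Suc (Suc (2 * k - 2))" using k1 by simp
  have "U cs (2 * k) = 2 * cs * U cs (Suc (2 * k - 2)) - U cs (2 * k - 2)"
    by (subst e) simp
  moreover have "Suc (2 * k - 2) = 2 * k - 1" using k1 by simp
  ultimately show ?thesis using U_fin_facts(3,5)[OF k1] by simp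
qed

lemma u_eta: "prodw (altw x t (2 * k - 1)) = refl (eta x t)"
proof (rule Lin_eq_ab[OF xS tS xt])
  show "(cc x t)\<^sup>2 \<noteq> 1" using U_fin_facts(6)[OF k1] cxt by simp
  show "Lin (prodw (altw x t (2 * k - 1)))" by (rule prodw_Lin[OF altw_setS[OF xS tS]])
  show "Lin (refl (eta x t))" by (rule refl_Lin[OF eta_fs eta_BB])
  show "prodw (altw x t (2 * k - 1)) v = v \<and> refl (eta x t) v = v"
    if "fs v" "B (simple_root x) v = 0" "B (simple_root t) v = 0" for v
  proof
    show "prodw (altw x t (2 * k - 1)) v = v" by (rule prodw_fix[OF altw_set that(2,3)])
    have "B (eta x t) v = 0" unfolding eta_eq using that xS tS by (simp add: B_lc_left fs_simple)
    then show "refl (eta x t) v = v" by (simp add: refl_def)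
  qed
  show "prodw (altw x t (2 * k - 1)) (simple_root x) = refl (eta x t) (simple_root x)"
  proof -
    have o: "odd (2 * k - 1)" using k1 by presburger
    have s: "Suc (2 * k - 1) = 2 * k" using k1 by simp
    have "prodw (altw x t (2 * k - 1)) (simple_root x) = lc (U cs (2 * k - 1)) (simple_root x) (U cs (Suc (2 * k - 1))) (simple_root t)"
      using alt_formula[OF xS tS xt, of "2 * k - 1"] o cxt by simp
    also have "\<dots> = simple_root x" unfolding s using U_fin_facts(3,5)[OF k1] by (simp add: lc_def fun_eq_iff)
    also have "\<dots> = refl (eta x t) (simple_root x)"
      using eta_Bx by (simp add: refl_def B_sym fun_eq_iff)
    finally show ?thesis .
  qed
  show "prodw (altw x t (2 * k - 1)) (simple_root t) = refl (eta x t) (simple_root t)"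
  proof -
    define j where "j = 2 * k - 2"
    have j: "2 * k - 1 = Suc j" "even j" using k1 by (auto simp: j_def)
    have "prodw (altw x t (2 * k - 1)) (simple_root t) = prodw (altw t x j) (sref S m t (simple_root t))"
      unfolding j by (simp add: prodw_append)
    also have "sref S m t (simple_root t) = lc (-1) (simple_root t) 0 (simple_root x)"
      using sref_simple_self[OF cox tS] by (simp add: lc_neg)
    also have "prodw (altw t x j) \<dots> = lc (-1) (prodw (altw t x j) (simple_root t)) 0 (prodw (altw t x j) (simple_root x))"
    proof -
      have "Lin (prodw (altw t x j))" using prodw_Lin altw_setS xS tS by blast
      then show ?thesis using xS tS fs_simple unfolding Lin_def by auto
    qed
    also have "prodw (altw t x j) (simple_root t) = lc (U cs (Suc j)) (simple_root t) (U cs j) (simple_root x)"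
      using alt_formula[OF tS xS xt[symmetric], of j] j(2) cc_sym[OF xS tS] cxt by simp
    also have "U cs (Suc j) = 1" using U_fin_facts(5)[OF k1] j(1) by simp
    also have "U cs j = 2 * cs" using U2k2 by (simp add: j_def)
    finally have L: "prodw (altw x t (2 * k - 1)) (simple_root t) = (\<lambda>u. - simple_root t u - 2 * cs * simple_root x u)"
      by (simp add: lc_def fun_eq_iff)
    have "refl (eta x t) (simple_root t) = (\<lambda>u. simple_root t u - 2 * sn * ((cs / sn) * simple_root x u + (1 / sn) * simple_root t u))"
      using eta_Bt by (simp add: refl_def B_sym eta_eq lc_def fun_eq_iff)
    also have "\<dots> = (\<lambda>u. - simple_root t u - 2 * cs * simple_root x u)"
      using sn_pos by (simp add: fun_eq_iff field_simps)
    finally show ?thesis using L by simp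
  qed
qed

lemma eta_perp: "refl (eta x t) \<in> perp_reflections S m x"
proof -
  obtain w t' where w: "w \<in> coxW S m" "t' \<in> S"
    and e: "w (simple_root t') = (\<lambda>u. (cs * simple_root x u + simple_root t u) / sn)
          \<or> w (simple_root t') = - (\<lambda>u. (cs * simple_root x u + simple_root t u) / sn)"
    using perp_root_eta[OF cox xS tS xt mxt k1] by blast
  have E: "(\<lambda>u. (cs * simple_root x u + simple_root t u) / sn) = eta x t"
    by (simp add: eta_eq lc_def fun_eq_iff add_divide_distrib)
  have wg: "w \<in> genA S" using w(1) coxW_genA by simp
  have e2: "w (simple_root t') = eta x t \<or> w (simple_root t') = - eta x t" using e E by simp
  have "refl (eta x t) = refl (w (simple_root t'))" using e2 refl_neg by metis
  also have "\<dots> = w \<circ> sref S m t' \<circ> inv w" by (rule refl_root_conj[OF wg w(2)])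
  finally have R: "refl (eta x t) = w \<circ> sref S m t' \<circ> inv w" .
  have "B (w (simple_root t')) (simple_root x) = 0"
  proof -
    have "B (eta x t) (simple_root x) = 0" using eta_Bx B_sym by metis
    moreover have "B (- eta x t) (simple_root x) = - B (eta x t) (simple_root x)"
      using B_lc_left[OF eta_fs eta_fs, of "-1" 0 "simple_root x"] lc_neg by simp
    ultimately show ?thesis using e2 by auto
  qed
  then show ?thesis unfolding perp_reflections_def R using w by blast
qed

lemma supp_eta:
  assumes r: "root g" and gx: "B (simple_root x) g = 0" and gt: "g t > 0"
    and supp: "\<And>u. u \<in> S \<Longrightarrow> u \<noteq> x \<Longrightarrow> u \<noteq> t \<Longrightarrow> g u = 0"
  shows "g = eta x t"
proof -
  have ge: "g = lc (g x) (simple_root x) (g t) (simple_root t)"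
  proof
    fix u
    show "g u = lc (g x) (simple_root x) (g t) (simple_root t) u"
      using supp[of u] root_out[OF r, of u] xS tS xt by (cases "u = x"; cases "u = t") (auto simp: lc_def simple_root_def)
  qed
  have "B (simple_root x) g = g x - cs * g t"
    by (subst ge) (simp add: B_lc_right fs_simple xS tS B_simple_self B_ab cxt)
  then have gxv: "g x = cs * g t" using gx by simp
  have Btg: "B (simple_root t) g = - cs * g x + g t"
    by (subst ge) (simp add: B_lc_right fs_simple xS tS B_simple_self B_ab cxt ctx)
  have "B g g = g x * B (simple_root x) g + g t * B (simple_root t) g"
    by (subst (1) ge) (simp add: B_lc_left fs_simple xS tS)
  then have "1 = g t * (g t * (1 - cs\<^sup>2))" using root_BB[OF r] gx Btg gxv by (simp add: algebra_simps power2_eq_square)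
  then have "(g t * sn)\<^sup>2 = 1" unfolding cs_sn by (simp add: power2_eq_square algebra_simps)
  then have "g t * sn = 1 \<or> g t * sn = -1" by (simp add: power2_eq_1_iff)
  moreover have "g t * sn > 0" using gt sn_pos by simp
  ultimately have "g t * sn = 1" by linarith
  then have "g t = 1 / sn" using sn_pos by (simp add: field_simps)
  then show ?thesis using ge gxv by (simp add: eta_eq)
qed

end

end


lemma gen_group_sub: "g \<in> gen_group A \<Longrightarrow> A \<subseteq> gen_group C \<Longrightarrow> g \<in> gen_group C"
  by (induction rule: gen_group.induct) (auto intro: gen_group.intros)

context ecox
begin

lemma B_uminus_right: "B u (- v) = - B u v"
proof -
  have "vsupp S (- v) = vsupp S v" by (auto simp: vsupp_def)
  then show ?thesis by (simp add: bform_def sum_negf)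
qed

definition FF :: "'a \<Rightarrow> (('a \<Rightarrow> real) \<Rightarrow> ('a \<Rightarrow> real)) set" where
  "FF x = (\<lambda>t. refl (eta x t)) ` {t \<in> S. t \<noteq> x \<and> m x t \<noteq> \<infinity>}"

lemma supp_two:
  assumes xS: "x \<in> S" and tS: "t \<in> S" and xt: "x \<noteq> t"
    and r: "root g" and gx: "B (simple_root x) g = 0"
    and supp: "\<And>u. u \<in> S \<Longrightarrow> u \<noteq> x \<Longrightarrow> u \<noteq> t \<Longrightarrow> g u = 0"
  shows "(g t)\<^sup>2 * (1 - (cc x t)\<^sup>2) = 1"
proof -
  define c where "c = cc x t"
  have ge: "g = lc (g x) (simple_root x) (g t) (simple_root t)"
  proof
    fix u
    show "g u = lc (g x) (simple_root x) (g t) (simple_root t) u"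
      using supp[of u] root_out[OF r, of u] xS tS xt by (cases "u = x"; cases "u = t") (auto simp: lc_def simple_root_def)
  qed
  have "B (simple_root x) g = g x - c * g t"
    by (subst ge) (simp add: B_lc_right fs_simple xS tS B_simple_self B_ab c_def)
  then have gxv: "g x = c * g t" using gx by simp
  have Btg: "B (simple_root t) g = - c * g x + g t"
    by (subst ge) (simp add: B_lc_right fs_simple xS tS B_simple_self B_ab c_def cc_sym[OF xS tS])
  have "B g g = g x * B (simple_root x) g + g t * B (simple_root t) g"
    by (subst (1) ge) (simp add: B_lc_left fs_simple xS tS)
  then show ?thesis using root_BB[OF r] gx Btg gxv by (simp add: algebra_simps power2_eq_square c_def)
qed

lemma main_perp:
  assumes xS: "x \<in> S"
  shows "root g \<Longrightarrow> B (simple_root x) g = 0 \<Longrightarrow> refl g \<in> gen_group (FF x)"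
proof (induction "len S (refl g)" arbitrary: g rule: less_induct)
  case less
  obtain g' where g': "root g'" "pos g'" "B (simple_root x) g' = 0" "refl g' = refl g"
  proof (cases "pos g")
    case True then show ?thesis using that less.prems by blast
  next
    case False
    then have "pos (- g)" using root_sign[OF less.prems(1)] by blast
    moreover have "B (simple_root x) (- g) = 0" using less.prems(2) B_uminus_right by simp
    ultimately show ?thesis using that root_neg[OF less.prems(1)] refl_neg by blast
  qed
  obtain t where t: "t \<in> S" "g' t > 0" "B (simple_root t) g' > 0" using factB[OF g'(1,2)] by blast
  have xt: "x \<noteq> t" using t(3) g'(3) by auto
  show ?case
  proof (cases rule: m_cases[OF xS t(1) xt])
    case 1
    show ?thesis
    proof (cases "\<exists>r'. r' \<in> S \<and> r' \<noteq> x \<and> r' \<noteq> t \<and> g' r' \<noteq> 0")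
      case True
      then obtain r' where r': "r' \<in> S" "r' \<noteq> x" "r' \<noteq> t" "g' r' \<noteq> 0" by blast
      define i where "i = Suc (len S (refl g'))"
      have "\<forall>j. 1 \<le> j \<and> j \<le> i \<longrightarrow> U (cc x t) j > 0" using 1 by (simp add: U_one)
      then have "len S (refl (prodw (altw x t i) g')) + i \<le> len S (refl g')"
        using chain[OF xS t(1) xt g'(1,2,3) t(3) r'] by blast
      then show ?thesis by (simp add: i_def)
    next
      case False
      then have "(g' t)\<^sup>2 * (1 - (cc x t)\<^sup>2) = 1" using supp_two[OF xS t(1) xt g'(1,3)] by blast
      then show ?thesis using 1 by simp
    qed
  next
    case (2 k)
    have tN: "refl (eta x t) \<in> FF x" unfolding FF_def using t(1) xt 2(2) by auto
    show ?thesis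
    proof (cases "\<exists>r'. r' \<in> S \<and> r' \<noteq> x \<and> r' \<noteq> t \<and> g' r' \<noteq> 0")
      case False
      then have "g' = eta x t" using supp_eta[OF xS t(1) xt 2(1,2,3) g'(1,3) t(2)] by blast
      then show ?thesis using g'(4) tN by (metis gen_base)
    next
      case True
      then obtain r' where r': "r' \<in> S" "r' \<noteq> x" "r' \<noteq> t" "g' r' \<noteq> 0" by blast
      define i where "i = 2 * k - 1"
      define d where "d = prodw (altw x t i) g'"
      have "\<forall>j. 1 \<le> j \<and> j \<le> i \<longrightarrow> U (cc x t) j > 0" using U_fin_facts(2)[OF 2(1)] 2(3) by (auto simp: i_def)
      then have ch: "root d" "B (simple_root (nxt x t i)) d = B (simple_root t) g' * U (cc x t) (Suc i)"
          "len S (refl d) + i \<le> len S (refl g')"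
        using chain[OF xS t(1) xt g'(1,2,3) t(3) r'] unfolding d_def by blast+
      have oi: "odd i" "Suc i = 2 * k" "i \<ge> 1" using 2(1) by (auto simp: i_def)
      have dx: "B (simple_root x) d = 0" using ch(2) oi U_fin_facts(3)[OF 2(1)] 2(3) by (simp add: nxt_def)
      have ld: "len S (refl d) < len S (refl g)" using ch(3) oi(3) g'(4) by simp
      have IH: "refl d \<in> gen_group (FF x)" using less.hyps[OF ld ch(1) dx] .
      define rho where "rho = refl (eta x t)"
      have rho_u: "prodw (altw x t i) = rho" using u_eta[OF xS t(1) xt 2(1,2,3)] by (simp add: rho_def i_def)
      have Lr: "Lin rho" unfolding rho_def by (rule refl_Lin[OF eta_fs eta_BB]; fact 2 xS t(1) xt)+
      have rr: "rho \<circ> rho = id"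
        using refl_invol[OF eta_fs[OF xS t(1) xt 2(1,2,3)] eta_BB[OF xS t(1) xt 2(1,2,3)]]
        by (simp add: rho_def fun_eq_iff)
      have irho: "inv rho = rho" using rr by (simp add: inv_unique_comp)
      have "refl d = rho \<circ> refl g' \<circ> rho"
        using refl_conj[OF Lr root_fs[OF g'(1)]] irho rho_u by (simp add: d_def)
      then have "rho \<circ> refl d \<circ> rho = (rho \<circ> rho) \<circ> refl g' \<circ> (rho \<circ> rho)" by (simp add: comp_assoc)
      then have "rho \<circ> refl d \<circ> rho = refl g'" using rr by simp
      moreover have "rho \<in> gen_group (FF x)" using tN by (simp add: rho_def gen_base)
      ultimately have "refl g' \<in> gen_group (FF x)" using IH by (metis gen_comp)
      then show ?thesis using g'(4) by simp
    qed
  qed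
qed

lemma Wperp_fg:
  assumes xS: "x \<in> S" and fin: "finite {s \<in> S. m x s < \<infinity>}"
  shows "finitely_generated (Wperp S m x)"
  unfolding finitely_generated_def
proof (intro exI conjI)
  show "finite (FF x)" unfolding FF_def
    by (rule finite_imageI, rule finite_subset[OF _ fin]) auto
  have FW: "FF x \<subseteq> Wperp S m x"
  proof
    fix f assume "f \<in> FF x"
    then obtain t where t: "t \<in> S" "t \<noteq> x" "m x t \<noteq> \<infinity>" "f = refl (eta x t)" unfolding FF_def by blast
    then obtain k where k: "k \<ge> 1" "m x t = enat (2 * k)" "cc x t = cos (pi / real (2 * k))"
      using m_cases[OF xS t(1)] by metis
    have "f \<in> perp_reflections S m x" using eta_perp[OF xS t(1) _ k] t by auto
    then show "f \<in> Wperp S m x" unfolding Wperp_def by (rule gen_base)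
  qed
  then show "FF x \<subseteq> Wperp S m x" .
  show "gen_group (FF x) = Wperp S m x"
  proof
    show "gen_group (FF x) \<subseteq> Wperp S m x" using FW unfolding Wperp_def using gen_group_sub by blast
    have "perp_reflections S m x \<subseteq> gen_group (FF x)"
    proof
      fix r assume "r \<in> perp_reflections S m x"
      then obtain w s where ws: "r = w \<circ> sref S m s \<circ> inv w" "w \<in> coxW S m" "s \<in> S"
        "bform S m (w (simple_root s)) (simple_root x) = 0" unfolding perp_reflections_def by blast
      have wg: "w \<in> genA S" using ws(2) coxW_genA by simp
      have "r = refl (w (simple_root s))" using refl_root_conj[OF wg ws(3)] ws(1) by simp
      moreover have "root (w (simple_root s))" unfolding root_def using wg ws(3) by blast
      moreover have "B (simple_root x) (w (simple_root s)) = 0" using ws(4) B_sym by metis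
      ultimately show "r \<in> gen_group (FF x)" using main_perp[OF xS] by simp
    qed
    then show "Wperp S m x \<subseteq> gen_group (FF x)" unfolding Wperp_def using gen_group_sub by blast
  qed
qed

end

theorem corollary4p17:
  fixes S :: "'a set" and m :: "'a \<Rightarrow> 'a \<Rightarrow> enat" and x :: 'a
  assumes "coxeter_matrix S m"
    and "even_coxeter S m"
    and "x \<in> S"
  shows "finitely_generated (Wperp S m x) \<longleftrightarrow> finite {s \<in> S. m x s < \<infinity>}"
proof
  assume "finitely_generated (Wperp S m x)"
  then show "finite {s \<in> S. m x s < \<infinity>}" by (rule fg_imp_finite[OF assms])
next
  assume fin: "finite {s \<in> S. m x s < \<infinity>}"
  interpret ecox S m using assms by (simp add: ecox_def ecox_axioms_def coxsys_def)
  show "finitely_generated (Wperp S m x)" by (rule Wperp_fg[OF assms(3) fin])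
qed


end
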